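(* Let $S$ be a dense subsemigroup of $((0,\infty),+)$, let $(X,\langle T_s\rangle_{s\in S})$ be a dynamical system and let $x,y\in X$. There is an idempotent $u\in K(O^{+}(S))$ such that $T_u(x)=y$ if and only if $y$ is uniformly recurrent near zero and $x$ and $y$ are proximal near zero.
   Context: "Dense" means dense in the usual topology of $(0,\infty)$. $\beta S$ is the Stone–Čech compactification of the discrete set $S$ (ultrafilters on $S$), with $+$ extended so that $(\beta S,+)$ is a compact right topological semigroup: $A\in p+q$ iff $\{x\in S:-x+A\in q\}\in p$, where $-x+A=\{y\in S:x+y\in A\}$. $O^{+}(S)=\{p\in\beta S: S\cap(0,\epsilon)\in p\text{ for every }\epsilon>0\}$, a compact right topological subsemigroup of $\beta S$; $K(O^{+}(S))$ denotes its smallest two-sided ideal. A dynamical system $(X,\langle T_s\rangle_{s\in S})$ consists of a compact Hausdorff space $X$ and continuous maps $T_s:X\to X$ with $T_s\circ T_t=T_{s+t}$. For $p\in\beta S$, $T_p(x)=p\text{-}\lim_{s\in S}T_s(x)$; $T_p\circ T_q=T_{p+q}$. A subset $B\subseteq S$ is syndetic near zero iff for every $\epsilon>0$ there exist a finite nonempty $F\subseteq (0,\epsilon)\cap S$ and $\delta>0$ with $S\cap(0,\delta)\subseteq\bigcup_{t\in F}(-t+B)$. A point $y$ is uniformly recurrent near zero iff for each neighbourhood $W$ of $y$, $\{s\in S:T_s(y)\in W\}$ is syndetic near zero. Points $x,y$ are proximal near zero iff for every neighbourhood $U$ of the diagonal in $X\times X$ and every $\epsilon>0$ there is $s\in S\cap(0,\epsilon)$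 with $(T_s(x),T_s(y))\in U$. *)

theory Defs
  imports "HOL-Analysis.Analysis"
begin

definition dense_subsemigroup :: "real set \<Rightarrow> bool" where
  "dense_subsemigroup S \<longleftrightarrow> S \<subseteq> {0<..} \<and> (\<forall>a\<in>S. \<forall>b\<in>S. a + b \<in> S)
     \<and> {0<..} \<subseteq> closure S"

text \<open>Points of beta S: ultrafilters on S, represented as sets of subsets of S.\<close>
definition ultrafilter_on :: "real set \<Rightarrow> real set set \<Rightarrow> bool" where
  "ultrafilter_on S p \<longleftrightarrow> (\<forall>A\<in>p. A \<subseteq> S) \<and> S \<in> p \<and> {} \<notin> p
     \<and> (\<forall>A\<in>p. \<forall>B\<in>p. A \<inter> B \<in> p)
     \<and> (\<forall>A B. A \<in> p \<and> A \<subseteq> B \<and> B \<subseteq> S \<longrightarrow> B \<in> p)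
     \<and> (\<forall>A. A \<subseteq> S \<longrightarrow> A \<in> p \<or> S - A \<in> p)"

definition betaS :: "real set \<Rightarrow> real set set set" where
  "betaS S = {p. ultrafilter_on S p}"

definition lshift :: "real set \<Rightarrow> real \<Rightarrow> real set \<Rightarrow> real set" where
  "lshift S x A = {y\<in>S. x + y \<in> A}"

definition uplus :: "real set \<Rightarrow> real set set \<Rightarrow> real set set \<Rightarrow> real set set" where
  "uplus S p q = {A. A \<subseteq> S \<and> {x\<in>S. lshift S x A \<in> q} \<in> p}"

definition Oplus :: "real set \<Rightarrow> real set set set" where
  "Oplus S = {p \<in> betaS S. \<forall>\<epsilon>>0. S \<inter> {0<..<\<epsilon>} \<in> p}"

definition two_sided_ideal :: "real set \<Rightarrow> real set set set \<Rightarrow> real set set set \<Rightarrow> bool" where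
  "two_sided_ideal S T I \<longleftrightarrow> I \<noteq> {} \<and> I \<subseteq> T
     \<and> (\<forall>p\<in>T. \<forall>q\<in>I. uplus S p q \<in> I \<and> uplus S q p \<in> I)"

definition Kideal :: "real set \<Rightarrow> real set set set \<Rightarrow> real set set set" where
  "Kideal S T = \<Inter>{I. two_sided_ideal S T I}"

definition dynamical_system :: "'a topology \<Rightarrow> real set \<Rightarrow> (real \<Rightarrow> 'a \<Rightarrow> 'a) \<Rightarrow> bool" where
  "dynamical_system X S T \<longleftrightarrow> compact_space X \<and> Hausdorff_space X
     \<and> (\<forall>s\<in>S. continuous_map X X (T s))
     \<and> (\<forall>s\<in>S. \<forall>t\<in>S. \<forall>z\<in>topspace X. T s (T t z) = T (s + t) z)"

definition Tp :: "'a topology \<Rightarrow> real set \<Rightarrow> (real \<Rightarrow> 'a \<Rightarrow> 'a) \<Rightarrow> real set set \<Rightarrow> 'a \<Rightarrow> 'a" where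
  "Tp X S T p x = (THE z. z \<in> topspace X \<and>
     (\<forall>U. openin X U \<and> z \<in> U \<longrightarrow> {s\<in>S. T s x \<in> U} \<in> p))"

definition syndetic_near_zero :: "real set \<Rightarrow> real set \<Rightarrow> bool" where
  "syndetic_near_zero S B \<longleftrightarrow> (\<forall>\<epsilon>>0. \<exists>F. finite F \<and> F \<noteq> {} \<and> F \<subseteq> {0<..<\<epsilon>} \<inter> S
     \<and> (\<exists>\<delta>>0. S \<inter> {0<..<\<delta>} \<subseteq> (\<Union>t\<in>F. lshift S t B)))"

definition neighbourhood :: "'a topology \<Rightarrow> 'a set \<Rightarrow> 'a set \<Rightarrow> bool" where
  "neighbourhood X A W \<longleftrightarrow> W \<subseteq> topspace X \<and> (\<exists>U. openin X U \<and> A \<subseteq> U \<and> U \<subseteq> W)"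

definition unif_rec_near_zero :: "'a topology \<Rightarrow> real set \<Rightarrow> (real \<Rightarrow> 'a \<Rightarrow> 'a) \<Rightarrow> 'a \<Rightarrow> bool" where
  "unif_rec_near_zero X S T y \<longleftrightarrow>
     (\<forall>W. neighbourhood X {y} W \<longrightarrow> syndetic_near_zero S {s\<in>S. T s y \<in> W})"

definition proximal_near_zero :: "'a topology \<Rightarrow> real set \<Rightarrow> (real \<Rightarrow> 'a \<Rightarrow> 'a) \<Rightarrow> 'a \<Rightarrow> 'a \<Rightarrow> bool" where
  "proximal_near_zero X S T x y \<longleftrightarrow>
     (\<forall>U \<epsilon>. neighbourhood (prod_topology X X) {(z, z) | z. z \<in> topspace X} U \<and> \<epsilon> > 0
        \<longrightarrow> (\<exists>s\<in>S \<inter> {0<..<\<epsilon>}. (T s x, T s y) \<in> U))"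

end

theory Submission
  imports Defs
begin


lemma uf_sub: "ultrafilter_on S p \<Longrightarrow> A \<in> p \<Longrightarrow> A \<subseteq> S"
  unfolding ultrafilter_on_def by (elim conjE) blast
lemma uf_S: "ultrafilter_on S p \<Longrightarrow> S \<in> p"
  unfolding ultrafilter_on_def by (elim conjE) assumption
lemma uf_empty: "ultrafilter_on S p \<Longrightarrow> {} \<notin> p"
  unfolding ultrafilter_on_def by (elim conjE) assumption
lemma uf_Int: "ultrafilter_on S p \<Longrightarrow> A \<in> p \<Longrightarrow> B \<in> p \<Longrightarrow> A \<inter> B \<in> p"
  unfolding ultrafilter_on_def by (elim conjE) blast
lemma uf_mono: "ultrafilter_on S p \<Longrightarrow> A \<in> p \<Longrightarrow> A \<subseteq> B \<Longrightarrow> B \<subseteq> S \<Longrightarrow> B \<in> p"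
  unfolding ultrafilter_on_def by (elim conjE) (drule spec, drule spec, erule mp, blast)
lemma uf_compl: "ultrafilter_on S p \<Longrightarrow> A \<subseteq> S \<Longrightarrow> A \<in> p \<or> S - A \<in> p"
  unfolding ultrafilter_on_def by (elim conjE) blast
lemma uf_ne: "ultrafilter_on S p \<Longrightarrow> A \<in> p \<Longrightarrow> B \<in> p \<Longrightarrow> A \<inter> B \<noteq> {}"
  using uf_Int uf_empty by fastforce
lemma uf_notcompl: "ultrafilter_on S p \<Longrightarrow> A \<in> p \<Longrightarrow> S - A \<notin> p"
  using uf_ne by blast
lemma uf_Un: "ultrafilter_on S p \<Longrightarrow> A \<union> B \<in> p \<Longrightarrow> A \<subseteq> S \<Longrightarrow> B \<subseteq> S \<Longrightarrow> A \<in> p \<or> B \<in> p"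
proof (rule ccontr)
  assume u: "ultrafilter_on S p" and ab: "A \<union> B \<in> p" "A \<subseteq> S" "B \<subseteq> S" and n: "\<not> (A \<in> p \<or> B \<in> p)"
  then have "S - A \<in> p" "S - B \<in> p" using uf_compl by blast+
  then have "(S - A) \<inter> (S - B) \<in> p" using u uf_Int by blast
  moreover have "(S - A) \<inter> (S - B) \<inter> (A \<union> B) = {}" by blast
  ultimately show False using uf_ne[OF u _ ab(1)] by blast
qed
lemma uf_UN:
  assumes u: "ultrafilter_on S p" and F: "finite F" and sub: "\<And>t. t \<in> F \<Longrightarrow> f t \<subseteq> S"
    and m: "(\<Union>t\<in>F. f t) \<in> p"
  shows "\<exists>t\<in>F. f t \<in> p"
  using F sub m
proof (induction F rule: finite_induct)
  case empty then show ?case using uf_empty[OF u] by simp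
next
  case (insert a F)
  have "f a \<union> (\<Union>t\<in>F. f t) \<in> p" using insert.prems by simp
  moreover have "(\<Union>t\<in>F. f t) \<subseteq> S" using insert.prems by auto
  ultimately have "f a \<in> p \<or> (\<Union>t\<in>F. f t) \<in> p" using uf_Un[OF u] insert.prems by blast
  then show ?case using insert by auto
qed
lemma uf_eq: "ultrafilter_on S p \<Longrightarrow> ultrafilter_on S q \<Longrightarrow> p \<subseteq> q \<Longrightarrow> p = q"
proof (rule equalityI, simp, rule subsetI)
  fix A assume u: "ultrafilter_on S p" "ultrafilter_on S q" "p \<subseteq> q" "A \<in> q"
  show "A \<in> p"
  proof (rule ccontr)
    assume "A \<notin> p"
    then have "S - A \<in> p" using uf_compl[OF u(1)] uf_sub[OF u(2) u(4)] by blast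
    then show False using u uf_notcompl by blast
  qed
qed

lemma ultrafilter_exists:
  assumes S: "S \<noteq> {}" and F: "\<F> \<subseteq> Pow S" "{} \<notin> \<F>" "\<And>A B. A \<in> \<F> \<Longrightarrow> B \<in> \<F> \<Longrightarrow> A \<inter> B \<in> \<F>"
  shows "\<exists>p. ultrafilter_on S p \<and> \<F> \<subseteq> p"
proof -
  define F0 where "F0 = insert S \<F>"
  define \<A> where "\<A> = {G. F0 \<subseteq> G \<and> G \<subseteq> Pow S \<and> {} \<notin> G \<and> (\<forall>A\<in>G. \<forall>B\<in>G. A \<inter> B \<in> G)}"
  have F0A: "F0 \<in> \<A>"
    unfolding \<A>_def F0_def using S F by (auto simp: Int_absorb1 Int_absorb2)
  have "\<forall>C\<in>chains \<A>. \<exists>U\<in>\<A>. \<forall>X\<in>C. X \<subseteq> U"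
  proof
    fix C assume C: "C \<in> chains \<A>"
    show "\<exists>U\<in>\<A>. \<forall>X\<in>C. X \<subseteq> U"
    proof (cases "C = {}")
      case True then show ?thesis using F0A by blast
    next
      case False
      have C1: "C \<subseteq> \<A>" and Cc0: "chain\<^sub>\<subseteq> C" using C by (auto simp: chains_def)
      have CA: "F0 \<subseteq> G \<and> G \<subseteq> Pow S \<and> {} \<notin> G \<and> (\<forall>A\<in>G. \<forall>B\<in>G. A \<inter> B \<in> G)" if "G \<in> C" for G
      proof -
        have "G \<in> \<A>" using C1 that by (rule subsetD)
        then show ?thesis unfolding \<A>_def by (rule CollectD)
      qed
      have Cc: "\<And>G1 G2. G1 \<in> C \<Longrightarrow> G2 \<in> C \<Longrightarrow> G1 \<subseteq> G2 \<or> G2 \<subseteq> G1"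
        using Cc0 unfolding chain_subset_def by blast
      have "\<Union>C \<in> \<A>"
        unfolding \<A>_def
      proof (intro CollectI conjI ballI)
        obtain G where "G \<in> C" using False by blast
        then have "F0 \<subseteq> G" using CA by blast
        then show "F0 \<subseteq> \<Union>C" using \<open>G \<in> C\<close> by blast
        show "\<Union>C \<subseteq> Pow S" using CA by (meson Union_least)
        show "{} \<notin> \<Union>C" using CA by (meson UnionE)
        fix A B assume "A \<in> \<Union>C" "B \<in> \<Union>C"
        then obtain G1 G2 where g: "G1 \<in> C" "G2 \<in> C" "A \<in> G1" "B \<in> G2" by blast
        then have "G1 \<subseteq> G2 \<or> G2 \<subseteq> G1" using Cc by blast
        then show "A \<inter> B \<in> \<Union>C"
        proof
          assume "G1 \<subseteq> G2"
          then have "A \<inter> B \<in> G2" using g CA[of G2] by blast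
          then show ?thesis using g by blast
        next
          assume "G2 \<subseteq> G1"
          then have "A \<inter> B \<in> G1" using g CA[of G1] by blast
          then show ?thesis using g by blast
        qed
      qed
      then show ?thesis by blast
    qed
  qed
  then obtain M where M: "M \<in> \<A>" and max: "\<And>X. X \<in> \<A> \<Longrightarrow> M \<subseteq> X \<Longrightarrow> X = M"
    using Zorn_Lemma2[of \<A>] by blast
  have Msub: "M \<subseteq> Pow S" and Me: "{} \<notin> M" and MI: "\<And>A B. A \<in> M \<Longrightarrow> B \<in> M \<Longrightarrow> A \<inter> B \<in> M"
    and MS: "S \<in> M" and MF: "\<F> \<subseteq> M"
    using M by (auto simp: \<A>_def F0_def)
  define Mu where "Mu = {B. B \<subseteq> S \<and> (\<exists>C\<in>M. C \<subseteq> B)}"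
  have "Mu \<in> \<A>" unfolding \<A>_def
  proof (intro CollectI conjI ballI)
    show "F0 \<subseteq> Mu" using M by (auto simp: \<A>_def Mu_def)
    show "Mu \<subseteq> Pow S" by (auto simp: Mu_def)
    show "{} \<notin> Mu" using Me by (auto simp: Mu_def)
    fix A B assume "A \<in> Mu" "B \<in> Mu"
    then obtain C1 C2 where "C1 \<in> M" "C2 \<in> M" "C1 \<subseteq> A" "C2 \<subseteq> B" "A \<subseteq> S" "B \<subseteq> S" by (auto simp: Mu_def)
    then show "A \<inter> B \<in> Mu" unfolding Mu_def using MI[of C1 C2] by blast
  qed
  moreover have "M \<subseteq> Mu" using Msub by (auto simp: Mu_def)
  ultimately have MuM: "Mu = M" using max by blast
  have up: "\<And>A B. A \<in> M \<Longrightarrow> A \<subseteq> B \<Longrightarrow> B \<subseteq> S \<Longrightarrow> B \<in> M"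
    using MuM unfolding Mu_def by blast
  have cmp: "A \<in> M \<or> S - A \<in> M" if AS: "A \<subseteq> S" for A
  proof (cases "\<forall>C\<in>M. C \<inter> A \<noteq> {}")
    case True
    define Ma where "Ma = {B. B \<subseteq> S \<and> (\<exists>C\<in>M. C \<inter> A \<subseteq> B)}"
    have "Ma \<in> \<A>" unfolding \<A>_def
    proof (intro CollectI conjI ballI)
      show "F0 \<subseteq> Ma" using M by (auto simp: \<A>_def Ma_def)
      show "Ma \<subseteq> Pow S" by (auto simp: Ma_def)
      show "{} \<notin> Ma" using True by (auto simp: Ma_def)
      fix B1 B2 assume "B1 \<in> Ma" "B2 \<in> Ma"
      then obtain C1 C2 where "C1 \<in> M" "C2 \<in> M" "C1 \<inter> A \<subseteq> B1" "C2 \<inter> A \<subseteq> B2" "B1 \<subseteq> S" "B2 \<subseteq> S" by (auto simp: Ma_def)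
      then show "B1 \<inter> B2 \<in> Ma" unfolding Ma_def using MI[of C1 C2] by blast
    qed
    moreover have "M \<subseteq> Ma" using Msub by (auto simp: Ma_def)
    ultimately have "Ma = M" using max by blast
    moreover have "A \<in> Ma" using MS AS by (auto simp: Ma_def)
    ultimately show ?thesis by simp
  next
    case False
    then obtain C where "C \<in> M" "C \<inter> A = {}" by blast
    then have "S - A \<in> M" using up[of C "S - A"] Msub by blast
    then show ?thesis by simp
  qed
  have "ultrafilter_on S M"
    unfolding ultrafilter_on_def
  proof (intro conjI)
    show "\<forall>A\<in>M. A \<subseteq> S" using Msub by blast
    show "\<forall>A\<in>M. \<forall>B\<in>M. A \<inter> B \<in> M" using MI by blast
    show "\<forall>A B. A \<in> M \<and> A \<subseteq> B \<and> B \<subseteq> S \<longrightarrow> B \<in> M" using up by blast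
    show "\<forall>A. A \<subseteq> S \<longrightarrow> A \<in> M \<or> S - A \<in> M" using cmp by blast
  qed (use MS Me in auto)
  then show ?thesis using MF by blast
qed


lemma lshift_sub: "lshift S x A \<subseteq> S" by (auto simp: lshift_def)

context
  fixes S :: "real set"
  assumes sg: "\<forall>a\<in>S. \<forall>b\<in>S. a + b \<in> S"
begin

lemma lshift_S: "x \<in> S \<Longrightarrow> lshift S x S = S" using sg by (auto simp: lshift_def)
lemma lshift_compl: "x \<in> S \<Longrightarrow> lshift S x (S - A) = S - lshift S x A" using sg by (auto simp: lshift_def)

lemma uplus_uf:
  assumes p: "ultrafilter_on S p" and q: "ultrafilter_on S q"
  shows "ultrafilter_on S (uplus S p q)"
proof -
  define \<phi> where "\<phi> A = {x\<in>S. lshift S x A \<in> q}" for A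
  have mem: "A \<in> uplus S p q \<longleftrightarrow> A \<subseteq> S \<and> \<phi> A \<in> p" for A by (simp add: uplus_def \<phi>_def)
  have phiS: "\<phi> S = S" using uf_S[OF q] lshift_S by (auto simp: \<phi>_def)
  have phiE: "\<phi> {} = {}" using uf_empty[OF q] by (auto simp: \<phi>_def lshift_def)
  have phiI: "\<phi> (A \<inter> B) = \<phi> A \<inter> \<phi> B" for A B
    unfolding \<phi>_def
  proof (intro equalityI subsetI)
    fix x assume "x \<in> {x\<in>S. lshift S x (A \<inter> B) \<in> q}"
    then have x: "x \<in> S" "lshift S x (A \<inter> B) \<in> q" by auto
    have "lshift S x (A \<inter> B) \<subseteq> lshift S x A" "lshift S x (A \<inter> B) \<subseteq> lshift S x B"
      by (auto simp: lshift_def)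
    then have "lshift S x A \<in> q" "lshift S x B \<in> q"
      using x(2) by (auto intro: uf_mono[OF q _ _ lshift_sub])
    then show "x \<in> {x\<in>S. lshift S x A \<in> q} \<inter> {x\<in>S. lshift S x B \<in> q}" using x by blast
  next
    fix x assume a: "x \<in> {x\<in>S. lshift S x A \<in> q} \<inter> {x\<in>S. lshift S x B \<in> q}"
    have eq: "lshift S x (A \<inter> B) = lshift S x A \<inter> lshift S x B" by (auto simp: lshift_def)
    show "x \<in> {x\<in>S. lshift S x (A \<inter> B) \<in> q}" using a uf_Int[OF q] eq by auto
  qed
  have phimono: "A \<subseteq> B \<Longrightarrow> \<phi> A \<subseteq> \<phi> B" for A B
  proof -
    assume "A \<subseteq> B"
    then have "lshift S x A \<subseteq> lshift S x B" for x by (auto simp: lshift_def)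
    then show ?thesis unfolding \<phi>_def by (auto intro: uf_mono[OF q _ _ lshift_sub])
  qed
  have phiC: "\<phi> (S - A) = S - \<phi> A" for A
  proof -
    have *: "(S - lshift S x A \<in> q) = (lshift S x A \<notin> q)" for x
      using uf_compl[OF q lshift_sub] uf_notcompl[OF q] by blast
    show ?thesis unfolding \<phi>_def
    proof (rule set_eqI)
      fix x show "x \<in> {x\<in>S. lshift S x (S-A)\<in>q} \<longleftrightarrow> x \<in> S - {x\<in>S. lshift S x A\<in>q}"
      proof (cases "x \<in> S")
        case True then have "lshift S x (S-A) = S - lshift S x A" by (rule lshift_compl)
        then show ?thesis using True *[of x] by simp
      next
        case False then show ?thesis by simp
      qed
    qed
  qed
  have phisub: "\<phi> A \<subseteq> S" for A by (auto simp: \<phi>_def)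
  show ?thesis unfolding ultrafilter_on_def
  proof (intro conjI)
    show "\<forall>A\<in>uplus S p q. A \<subseteq> S" using mem by blast
    show "S \<in> uplus S p q" using mem phiS uf_S[OF p] by simp
    show "{} \<notin> uplus S p q" using mem phiE uf_empty[OF p] by simp
    show "\<forall>A\<in>uplus S p q. \<forall>B\<in>uplus S p q. A \<inter> B \<in> uplus S p q"
    proof (intro ballI)
      fix A B assume "A \<in> uplus S p q" "B \<in> uplus S p q"
      then have "A \<subseteq> S" "\<phi> A \<in> p" "\<phi> B \<in> p" using mem by auto
      then show "A \<inter> B \<in> uplus S p q" using mem phiI uf_Int[OF p] by auto
    qed
    show "\<forall>A B. A \<in> uplus S p q \<and> A \<subseteq> B \<and> B \<subseteq> S \<longrightarrow> B \<in> uplus S p q"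
    proof (intro allI impI)
      fix A B assume "A \<in> uplus S p q \<and> A \<subseteq> B \<and> B \<subseteq> S"
      then have "\<phi> A \<in> p" "A \<subseteq> B" "B \<subseteq> S" using mem by auto
      then have "\<phi> B \<in> p" using phimono[of A B] uf_mono[OF p _ _ phisub] by blast
      then show "B \<in> uplus S p q" using mem \<open>B \<subseteq> S\<close> by auto
    qed
    show "\<forall>A. A \<subseteq> S \<longrightarrow> A \<in> uplus S p q \<or> S - A \<in> uplus S p q"
    proof (intro allI impI)
      fix A :: "real set" assume "A \<subseteq> S"
      then show "A \<in> uplus S p q \<or> S - A \<in> uplus S p q"
        using mem phiC uf_compl[OF p phisub[of A]] by auto
    qed
  qed
qed

lemma uplus_assoc:
  assumes p: "ultrafilter_on S p" and q: "ultrafilter_on S q" and r: "ultrafilter_on S r"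
  shows "uplus S (uplus S p q) r = uplus S p (uplus S q r)"
proof -
  have key: "lshift S y {x\<in>S. lshift S x A \<in> r} = {x\<in>S. lshift S x (lshift S y A) \<in> r}"
    if y: "y \<in> S" for y A
  proof -
    have "lshift S x (lshift S y A) = lshift S (y + x) A" if "x \<in> S" for x
      using sg that y by (auto simp: lshift_def add.assoc)
    then show ?thesis using sg y by (auto simp: lshift_def)
  qed
  show ?thesis
  proof (rule set_eqI)
    fix A
    have "A \<in> uplus S (uplus S p q) r \<longleftrightarrow> A \<subseteq> S \<and> {y\<in>S. lshift S y {x\<in>S. lshift S x A \<in> r} \<in> q} \<in> p"
      by (auto simp: uplus_def)
    also have "\<dots> \<longleftrightarrow> A \<subseteq> S \<and> {y\<in>S. {x\<in>S. lshift S x (lshift S y A) \<in> r} \<in> q} \<in> p"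
    proof -
      have "{y\<in>S. lshift S y {x\<in>S. lshift S x A \<in> r} \<in> q} = {y\<in>S. {x\<in>S. lshift S x (lshift S y A) \<in> r} \<in> q}"
        by (rule Collect_cong) (auto simp: key)
      then show ?thesis by simp
    qed
    also have "\<dots> \<longleftrightarrow> A \<in> uplus S p (uplus S q r)"
      by (auto simp: uplus_def lshift_sub)
    finally show "A \<in> uplus S (uplus S p q) r \<longleftrightarrow> A \<in> uplus S p (uplus S q r)" .
  qed
qed

end


definition bclosed :: "real set \<Rightarrow> real set set set \<Rightarrow> bool" where
  "bclosed S C \<longleftrightarrow> C \<subseteq> betaS S \<and> (\<forall>p\<in>betaS S. (\<forall>A\<in>p. \<exists>q\<in>C. A \<in> q) \<longrightarrow> p \<in> C)"

definition LI :: "real set \<Rightarrow> real set set set \<Rightarrow> bool" where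
  "LI S L \<longleftrightarrow> L \<noteq> {} \<and> L \<subseteq> Oplus S \<and> (\<forall>p\<in>Oplus S. \<forall>q\<in>L. uplus S p q \<in> L)"

definition minLI :: "real set \<Rightarrow> real set set set \<Rightarrow> bool" where
  "minLI S L \<longleftrightarrow> LI S L \<and> (\<forall>J. LI S J \<and> J \<subseteq> L \<longrightarrow> J = L)"

lemma betaS_iff: "p \<in> betaS S \<longleftrightarrow> ultrafilter_on S p" by (simp add: betaS_def)

lemma Oplus_beta: "p \<in> Oplus S \<Longrightarrow> ultrafilter_on S p" by (simp add: Oplus_def betaS_def)

lemma bclosed_sub: "bclosed S C \<Longrightarrow> C \<subseteq> betaS S" by (simp add: bclosed_def)

lemma bclosed_restrict:
  assumes C: "bclosed S C" and D: "\<D> \<subseteq> Pow S"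
  shows "bclosed S {q\<in>C. \<forall>D\<in>\<D>. D \<in> q}"
  unfolding bclosed_def
proof (intro conjI ballI impI)
  show "{q \<in> C. \<forall>D\<in>\<D>. D \<in> q} \<subseteq> betaS S" using C by (auto simp: bclosed_def)
next
  fix p assume p: "p \<in> betaS S" and h: "\<forall>A\<in>p. \<exists>q\<in>{q \<in> C. \<forall>D\<in>\<D>. D \<in> q}. A \<in> q"
  have "\<forall>A\<in>p. \<exists>q\<in>C. A \<in> q" using h by blast
  then have "p \<in> C" using C p unfolding bclosed_def by blast
  moreover have "D \<in> p" if "D \<in> \<D>" for D
  proof (rule ccontr)
    assume "D \<notin> p"
    then have "S - D \<in> p" using uf_compl[of S p D] p D that by (auto simp: betaS_def)
    then obtain q where q0: "q \<in> {q \<in> C. \<forall>D\<in>\<D>. D \<in> q}" "S - D \<in> q" using h by blast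
    then have q: "q \<in> C" "D \<in> q" "S - D \<in> q" using that by auto
    then have "ultrafilter_on S q" using C by (auto simp: bclosed_def betaS_def)
    then show False using q uf_notcompl by blast
  qed
  ultimately show "p \<in> {q \<in> C. \<forall>D\<in>\<D>. D \<in> q}" by blast
qed

lemma bclosed_beta: "bclosed S (betaS S)" by (auto simp: bclosed_def)

lemma bclosed_Inter:
  assumes "\<C> \<noteq> {}" "\<And>C. C \<in> \<C> \<Longrightarrow> bclosed S C"
  shows "bclosed S (\<Inter>\<C>)"
  unfolding bclosed_def
proof (intro conjI ballI impI)
  obtain C0 where "C0 \<in> \<C>" using assms by blast
  then show "\<Inter>\<C> \<subseteq> betaS S" using assms(2)[of C0] by (auto simp: bclosed_def)
next
  fix p assume p: "p \<in> betaS S" and h: "\<forall>A\<in>p. \<exists>q\<in>\<Inter>\<C>. A \<in> q"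
  show "p \<in> \<Inter>\<C>"
  proof
    fix C assume "C \<in> \<C>"
    then have "bclosed S C" "\<forall>A\<in>p. \<exists>q\<in>C. A \<in> q" using assms h by blast+
    then show "p \<in> C" using p unfolding bclosed_def by blast
  qed
qed

lemma bcompact:
  assumes S: "S \<noteq> {}" and ne: "\<C> \<noteq> {}" and cl: "\<And>C. C \<in> \<C> \<Longrightarrow> bclosed S C \<and> C \<noteq> {}"
    and dir: "\<And>C1 C2. C1 \<in> \<C> \<Longrightarrow> C2 \<in> \<C> \<Longrightarrow> \<exists>C3\<in>\<C>. C3 \<subseteq> C1 \<inter> C2"
  shows "\<exists>p. \<forall>C\<in>\<C>. p \<in> C"
proof -
  define \<F> where "\<F> = {A. A \<subseteq> S \<and> (\<exists>C\<in>\<C>. \<forall>q\<in>C. A \<in> q)}"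
  have ufC: "\<And>C q. C \<in> \<C> \<Longrightarrow> q \<in> C \<Longrightarrow> ultrafilter_on S q"
    using cl by (auto simp: bclosed_def betaS_def)
  have "\<F> \<subseteq> Pow S" by (auto simp: \<F>_def)
  moreover have "{} \<notin> \<F>"
  proof
    assume "{} \<in> \<F>"
    then obtain C where "C \<in> \<C>" "\<forall>q\<in>C. {} \<in> q" by (auto simp: \<F>_def)
    moreover obtain q where "q \<in> C" using cl \<open>C \<in> \<C>\<close> by blast
    ultimately show False using ufC uf_empty by blast
  qed
  moreover have "A \<inter> B \<in> \<F>" if AB: "A \<in> \<F>" "B \<in> \<F>" for A B
  proof -
    obtain C1 where c1: "C1 \<in> \<C>" "\<forall>q\<in>C1. A \<in> q" "A \<subseteq> S"
      using AB(1) unfolding \<F>_def by blast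
    obtain C2 where c2: "C2 \<in> \<C>" "\<forall>q\<in>C2. B \<in> q" "B \<subseteq> S"
      using AB(2) unfolding \<F>_def by blast
    note c = c1(1) c2(1) c1(2) c2(2) c1(3) c2(3)
    obtain C3 where c3: "C3 \<in> \<C>" "C3 \<subseteq> C1 \<inter> C2" using dir[OF c(1,2)] by blast
    have "\<forall>q\<in>C3. A \<inter> B \<in> q"
    proof
      fix q assume q: "q \<in> C3"
      then have "q \<in> C1" "q \<in> C2" using c3 by auto
      then have "A \<in> q" "B \<in> q" using c by auto
      then show "A \<inter> B \<in> q" using uf_Int[OF ufC[OF c3(1) q]] by blast
    qed
    then show ?thesis using c c3 by (auto simp: \<F>_def)
  qed
  ultimately obtain p where p: "ultrafilter_on S p" "\<F> \<subseteq> p" using ultrafilter_exists[OF S] by metis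
  have "p \<in> C" if C: "C \<in> \<C>" for C
  proof -
    have "\<exists>q\<in>C. A \<in> q" if A: "A \<in> p" for A
    proof (rule ccontr)
      assume "\<not> (\<exists>q\<in>C. A \<in> q)"
      then have "\<forall>q\<in>C. S - A \<in> q" using uf_compl[OF ufC[OF C] uf_sub[OF p(1) A]] by blast
      then have "S - A \<in> \<F>" using C by (auto simp: \<F>_def)
      then show False using p uf_notcompl A by blast
    qed
    then show ?thesis using cl[OF C] p(1) by (auto simp: bclosed_def betaS_def)
  qed
  then show ?thesis by blast
qed

context
  fixes S :: "real set"
  assumes ds: "dense_subsemigroup S"
begin

lemma sg: "\<forall>a\<in>S. \<forall>b\<in>S. a + b \<in> S" using ds by (simp add: dense_subsemigroup_def)
lemma Spos: "s \<in> S \<Longrightarrow> s > 0" using ds by (auto simp: dense_subsemigroup_def)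

lemma dense_small: assumes e: "e > 0" shows "S \<inter> {0<..<e} \<noteq> {}"
proof -
  have "e/2 \<in> closure S" using ds e by (auto simp: dense_subsemigroup_def)
  then have "\<exists>y\<in>S. dist y (e/2) < e/2" using e closure_approachable[of "e/2" S] by (meson half_gt_zero)
  then obtain y where "y \<in> S" "dist y (e/2) < e/2" by blast
  then have "\<bar>y - e/2\<bar> < e/2" "y \<in> S" by (simp_all only: dist_real_def)
  then have "y - e / 2 < e / 2 \<and> - (y - e / 2) < e / 2" "y \<in> S" by (simp_all only: abs_less_iff)
  then have "y \<in> S" "0 < y" "y < e" by linarith+
  then have "y \<in> S \<inter> {0<..<e}" by simp
  then show ?thesis by blast
qed

lemma S_ne: "S \<noteq> {}" using dense_small[of 1] by auto

lemma Oplus_bclosed: "bclosed S (Oplus S)"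
proof -
  have "Oplus S = {q\<in>betaS S. \<forall>D\<in>{S \<inter> {0<..<e} |e. e > 0}. D \<in> q}"
    by (auto simp: Oplus_def)
  moreover have "bclosed S {q\<in>betaS S. \<forall>D\<in>{S \<inter> {0<..<e} |e. e > 0}. D \<in> q}"
    by (rule bclosed_restrict[OF bclosed_beta]) auto
  ultimately show ?thesis by simp
qed

lemma Oplus_ne: "Oplus S \<noteq> {}"
proof -
  define \<F> where "\<F> = {S \<inter> {0<..<e} |e. e > 0}"
  have "\<F> \<subseteq> Pow S" "{} \<notin> \<F>" using dense_small by (auto simp: \<F>_def)
  moreover have "A \<inter> B \<in> \<F>" if AB: "A \<in> \<F>" "B \<in> \<F>" for A B
  proof -
    obtain e1 where "A = S \<inter> {0<..<e1}" "e1 > 0" using AB(1) by (auto simp: \<F>_def)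
    moreover obtain e2 where "B = S \<inter> {0<..<e2}" "e2 > 0" using AB(2) by (auto simp: \<F>_def)
    ultimately have "A \<inter> B = S \<inter> {0<..<min e1 e2}" "min e1 e2 > 0" by auto
    then show ?thesis by (auto simp: \<F>_def)
  qed
  ultimately obtain p where "ultrafilter_on S p" "\<F> \<subseteq> p" using ultrafilter_exists[OF S_ne] by metis
  then have "p \<in> Oplus S" by (auto simp: Oplus_def betaS_def \<F>_def)
  then show ?thesis by blast
qed

lemma uplus_beta: "p \<in> betaS S \<Longrightarrow> q \<in> betaS S \<Longrightarrow> uplus S p q \<in> betaS S"
  using uplus_uf[OF sg] by (simp add: betaS_def)

lemma assoc: "p \<in> betaS S \<Longrightarrow> q \<in> betaS S \<Longrightarrow> r \<in> betaS S \<Longrightarrow>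
   uplus S (uplus S p q) r = uplus S p (uplus S q r)"
  using uplus_assoc[OF sg] by (simp add: betaS_def)

lemma Oplus_sub: "Oplus S \<subseteq> betaS S" by (auto simp: Oplus_def)

lemma uplus_Oplus:
  assumes p: "p \<in> Oplus S" and q: "q \<in> Oplus S"
  shows "uplus S p q \<in> Oplus S"
proof -
  have up: "ultrafilter_on S p" "ultrafilter_on S q" using p q by (auto simp: Oplus_def betaS_def)
  have "S \<inter> {0<..<e} \<in> uplus S p q" if e: "e > 0" for e
  proof -
    have he: "S \<inter> {0<..<e/2} \<in> p" "S \<inter> {0<..<e/2} \<in> q" using p q e by (auto simp: Oplus_def)
    have "S \<inter> {0<..<e/2} \<subseteq> {x\<in>S. lshift S x (S \<inter> {0<..<e}) \<in> q}"
    proof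
      fix x assume x: "x \<in> S \<inter> {0<..<e/2}"
      have "S \<inter> {0<..<e/2} \<subseteq> lshift S x (S \<inter> {0<..<e})"
        using x sg by (auto simp: lshift_def)
      then have "lshift S x (S \<inter> {0<..<e}) \<in> q" using uf_mono[OF up(2) he(2) _ lshift_sub] by blast
      then show "x \<in> {x\<in>S. lshift S x (S \<inter> {0<..<e}) \<in> q}" using x by blast
    qed
    then have "{x\<in>S. lshift S x (S \<inter> {0<..<e}) \<in> q} \<in> p" using uf_mono[OF up(1) he(1)] by blast
    then show ?thesis by (simp add: uplus_def)
  qed
  moreover have "uplus S p q \<in> betaS S" using uplus_beta p q Oplus_sub by blast
  ultimately show ?thesis by (simp add: Oplus_def)
qed

lemma image_bclosed:
  assumes M: "bclosed S M" and p: "p \<in> betaS S"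
  shows "bclosed S ((\<lambda>q. uplus S q p) ` M)"
  unfolding bclosed_def
proof (intro conjI ballI impI)
  show "(\<lambda>q. uplus S q p) ` M \<subseteq> betaS S" using M p uplus_beta by (auto simp: bclosed_def)
next
  fix r assume r: "r \<in> betaS S" and h: "\<forall>A\<in>r. \<exists>q'\<in>(\<lambda>q. uplus S q p) ` M. A \<in> q'"
  have ur: "ultrafilter_on S r" using r by (simp add: betaS_def)
  have MB: "\<And>q. q \<in> M \<Longrightarrow> ultrafilter_on S (uplus S q p)"
    using M p uplus_beta by (auto simp: bclosed_def betaS_def)
  define \<phi> where "\<phi> A = {x\<in>S. lshift S x A \<in> p}" for A
  define CC where "CC A = {q\<in>M. A \<in> uplus S q p}" for A
  have CCeq: "CC A = {q\<in>M. \<forall>D\<in>{\<phi> A}. D \<in> q}" if "A \<subseteq> S" for A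
    using that by (auto simp: CC_def uplus_def \<phi>_def)
  have "\<exists>q. \<forall>C\<in>CC ` r. q \<in> C"
  proof (rule bcompact[OF S_ne])
    show "CC ` r \<noteq> {}" using uf_S[OF ur] by blast
  next
    fix C assume "C \<in> CC ` r"
    then obtain A where A: "A \<in> r" "C = CC A" by blast
    have "bclosed S C" using CCeq[OF uf_sub[OF ur A(1)]] A(2) bclosed_restrict[OF M, of "{\<phi> A}"]
      by (auto simp: \<phi>_def)
    moreover have "C \<noteq> {}" using h A by (auto simp: CC_def)
    ultimately show "bclosed S C \<and> C \<noteq> {}" by blast
  next
    fix C1 C2 assume "C1 \<in> CC ` r" "C2 \<in> CC ` r"
    then obtain A B where AB: "A \<in> r" "B \<in> r" "C1 = CC A" "C2 = CC B" by blast
    have "CC (A \<inter> B) \<subseteq> C1 \<inter> C2"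
    proof
      fix q assume "q \<in> CC (A \<inter> B)"
      then have q: "q \<in> M" "A \<inter> B \<in> uplus S q p" by (auto simp: CC_def)
      have "A \<in> uplus S q p" "B \<in> uplus S q p"
        using uf_mono[OF MB[OF q(1)] q(2)] uf_sub[OF ur] AB by auto
      then show "q \<in> C1 \<inter> C2" using AB q by (auto simp: CC_def)
    qed
    moreover have "A \<inter> B \<in> r" using uf_Int[OF ur AB(1,2)] .
    ultimately show "\<exists>C3\<in>CC ` r. C3 \<subseteq> C1 \<inter> C2" by blast
  qed
  then obtain q where q: "\<forall>A\<in>r. q \<in> CC A" by blast
  have qM: "q \<in> M" using q uf_S[OF ur] by (auto simp: CC_def)
  have "r \<subseteq> uplus S q p" using q by (auto simp: CC_def)
  then have "r = uplus S q p" using uf_eq[OF ur MB[OF qM]] by blast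
  then show "r \<in> (\<lambda>q. uplus S q p) ` M" using qM by blast
qed

end


context
  fixes S :: "real set"
  assumes ds: "dense_subsemigroup S"
begin

lemma zorn_min:
  assumes P: "\<And>N. N \<in> \<P> \<Longrightarrow> bclosed S N \<and> N \<noteq> {}"
    and ch: "\<And>\<C>. \<C> \<noteq> {} \<Longrightarrow> \<C> \<subseteq> \<P> \<Longrightarrow> chain\<^sub>\<subseteq> \<C> \<Longrightarrow> \<Inter>\<C> \<noteq> {} \<Longrightarrow> \<Inter>\<C> \<in> \<P>"
    and A: "A \<in> \<P>"
  shows "\<exists>M\<in>\<P>. M \<subseteq> A \<and> (\<forall>N\<in>\<P>. N \<subseteq> M \<longrightarrow> N = M)"
proof -
  define B where "B = betaS S"
  have PB: "N \<subseteq> B" if "N \<in> \<P>" for N using P[OF that] by (auto simp: bclosed_def B_def)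
  define \<A> where "\<A> = {B - N | N. N \<in> \<P> \<and> N \<subseteq> A}"
  have cc: "B - (B - N) = N" if "N \<in> \<P>" for N using PB[OF that] by blast
  have "\<forall>\<K>\<in>chains \<A>. \<exists>U\<in>\<A>. \<forall>X\<in>\<K>. X \<subseteq> U"
  proof
    fix \<K> assume K: "\<K> \<in> chains \<A>"
    have K1: "\<K> \<subseteq> \<A>" and K2: "chain\<^sub>\<subseteq> \<K>" using K by (auto simp: chains_def)
    show "\<exists>U\<in>\<A>. \<forall>X\<in>\<K>. X \<subseteq> U"
    proof (cases "\<K> = {}")
      case True
      have "B - A \<in> \<A>" using A unfolding \<A>_def by blast
      then show ?thesis using True by blast
    next
      case False
      define \<C> where "\<C> = (\<lambda>X. B - X) ` \<K>"
      have CP: "C \<in> \<P> \<and> C \<subseteq> A" if CC: "C \<in> \<C>" for C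
      proof -
        obtain X where X: "X \<in> \<K>" "C = B - X" using CC by (auto simp: \<C>_def)
        then have "X \<in> \<A>" using K1 by blast
        then obtain N where N: "X = B - N" "N \<in> \<P>" "N \<subseteq> A" unfolding \<A>_def by blast
        then have "C = N" using X cc by simp
        then show ?thesis using N by simp
      qed
      have Cne: "\<C> \<noteq> {}" using False by (auto simp: \<C>_def)
      have Cch: "chain\<^sub>\<subseteq> \<C>"
        unfolding chain_subset_def
      proof (intro ballI)
        fix C1 C2 assume "C1 \<in> \<C>" "C2 \<in> \<C>"
        then obtain X1 X2 where "X1 \<in> \<K>" "X2 \<in> \<K>" "C1 = B - X1" "C2 = B - X2" by (auto simp: \<C>_def)
        moreover have "X1 \<subseteq> X2 \<or> X2 \<subseteq> X1" using K2 calculation unfolding chain_subset_def by blast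
        ultimately show "C1 \<subseteq> C2 \<or> C2 \<subseteq> C1" by blast
      qed
      have "\<exists>p. \<forall>C\<in>\<C>. p \<in> C"
      proof (rule bcompact[OF S_ne[OF ds] Cne])
        fix C assume "C \<in> \<C>" then show "bclosed S C \<and> C \<noteq> {}" using CP P by blast
      next
        fix C1 C2 assume c: "C1 \<in> \<C>" "C2 \<in> \<C>"
        then have "C1 \<subseteq> C2 \<or> C2 \<subseteq> C1" using Cch unfolding chain_subset_def by blast
        then show "\<exists>C3\<in>\<C>. C3 \<subseteq> C1 \<inter> C2" using c by blast
      qed
      then have Ine: "\<Inter>\<C> \<noteq> {}" by blast
      have IP: "\<Inter>\<C> \<in> \<P>" using ch[OF Cne _ Cch Ine] CP by blast
      have IA: "\<Inter>\<C> \<subseteq> A" using CP Cne by blast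
      have "B - \<Inter>\<C> \<in> \<A>" using IP IA unfolding \<A>_def by blast
      moreover have "X \<subseteq> B - \<Inter>\<C>" if "X \<in> \<K>" for X
      proof -
        have "X \<in> \<A>" using that K1 by blast
        then have "X \<subseteq> B" unfolding \<A>_def by blast
        moreover have "B - X \<in> \<C>" using that by (auto simp: \<C>_def)
        ultimately show ?thesis by blast
      qed
      ultimately show ?thesis by blast
    qed
  qed
  then obtain MX where MX: "MX \<in> \<A>" and mx: "\<And>X. X \<in> \<A> \<Longrightarrow> MX \<subseteq> X \<Longrightarrow> X = MX"
    using Zorn_Lemma2[of \<A>] by blast
  obtain M where M: "MX = B - M" "M \<in> \<P>" "M \<subseteq> A" using MX unfolding \<A>_def by blast
  have "N = M" if N: "N \<in> \<P>" "N \<subseteq> M" for N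
  proof -
    have "B - N \<in> \<A>" using N M unfolding \<A>_def by blast
    moreover have "MX \<subseteq> B - N" using M N by blast
    ultimately have "B - N = B - M" using mx M by blast
    then show "N = M" using cc[OF N(1)] cc[OF M(2)] by metis
  qed
  then show ?thesis using M by blast
qed

lemma ellis:
  assumes E: "bclosed S E" "E \<noteq> {}" and sgE: "\<And>p q. p \<in> E \<Longrightarrow> q \<in> E \<Longrightarrow> uplus S p q \<in> E"
  shows "\<exists>u\<in>E. uplus S u u = u"
proof -
  define \<P> where "\<P> = {N. N \<subseteq> E \<and> bclosed S N \<and> N \<noteq> {} \<and> (\<forall>p\<in>N. \<forall>q\<in>N. uplus S p q \<in> N)}"
  have "\<exists>M\<in>\<P>. M \<subseteq> E \<and> (\<forall>N\<in>\<P>. N \<subseteq> M \<longrightarrow> N = M)"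
  proof (rule zorn_min)
    show "bclosed S N \<and> N \<noteq> {}" if "N \<in> \<P>" for N using that by (auto simp: \<P>_def)
  next
    fix \<C> assume C: "\<C> \<noteq> {}" "\<C> \<subseteq> \<P>" "chain\<^sub>\<subseteq> \<C>" "\<Inter>\<C> \<noteq> {}"
    have "bclosed S (\<Inter>\<C>)" using bclosed_Inter[OF C(1)] C(2) by (auto simp: \<P>_def)
    moreover have "\<Inter>\<C> \<subseteq> E"
    proof -
      obtain N0 where "N0 \<in> \<C>" using C(1) by blast
      then have "N0 \<subseteq> E" "\<Inter>\<C> \<subseteq> N0" using C(2) unfolding \<P>_def by blast+
      then show ?thesis by blast
    qed
    moreover have "\<forall>p\<in>\<Inter>\<C>. \<forall>q\<in>\<Inter>\<C>. uplus S p q \<in> \<Inter>\<C>"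
    proof (intro ballI)
      fix p q assume pq: "p \<in> \<Inter>\<C>" "q \<in> \<Inter>\<C>"
      show "uplus S p q \<in> \<Inter>\<C>"
      proof
        fix N assume N: "N \<in> \<C>"
        then have "p \<in> N" "q \<in> N" "N \<in> \<P>" using pq C(2) by auto
        then show "uplus S p q \<in> N" unfolding \<P>_def by blast
      qed
    qed
    ultimately show "\<Inter>\<C> \<in> \<P>" using C(4) unfolding \<P>_def by blast
  next
    show "E \<in> \<P>" using E sgE unfolding \<P>_def by blast
  qed
  then obtain M where M: "M \<in> \<P>" and Mmin: "\<And>N. N \<in> \<P> \<Longrightarrow> N \<subseteq> M \<Longrightarrow> N = M" by blast
  have Msub: "M \<subseteq> E" and Mcl: "bclosed S M" and Mne: "M \<noteq> {}"
    and Msg: "\<And>p q. p \<in> M \<Longrightarrow> q \<in> M \<Longrightarrow> uplus S p q \<in> M" using M unfolding \<P>_def by blast+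
  have MB: "M \<subseteq> betaS S" using Mcl by (simp add: bclosed_def)
  obtain p where pM: "p \<in> M" using Mne by blast
  have pB: "p \<in> betaS S" using pM MB by blast
  have up: "ultrafilter_on S p" using pB by (simp add: betaS_def)
  define Mp where "Mp = (\<lambda>q. uplus S q p) ` M"
  have "Mp \<in> \<P>" unfolding \<P>_def
  proof (intro CollectI conjI ballI)
    show "Mp \<subseteq> E" using Msg pM Msub by (auto simp: Mp_def)
    show "bclosed S Mp" unfolding Mp_def by (rule image_bclosed[OF ds Mcl pB])
    show "Mp \<noteq> {}" using Mne by (simp add: Mp_def)
  next
    fix a b assume "a \<in> Mp" "b \<in> Mp"
    then obtain q1 q2 where q: "q1 \<in> M" "q2 \<in> M" "a = uplus S q1 p" "b = uplus S q2 p" by (auto simp: Mp_def)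
    have "uplus S a b = uplus S (uplus S (uplus S q1 p) q2) p"
      using q assoc[OF ds] MB pB uplus_beta[OF ds] by (metis subsetD)
    moreover have "uplus S (uplus S q1 p) q2 \<in> M" using Msg q pM by blast
    ultimately show "uplus S a b \<in> Mp" by (auto simp: Mp_def)
  qed
  moreover have "Mp \<subseteq> M" using Msg pM by (auto simp: Mp_def)
  ultimately have "Mp = M" using Mmin by blast
  then obtain q0 where q0: "q0 \<in> M" "uplus S q0 p = p" using pM unfolding Mp_def by (metis imageE)
  define Z where "Z = {q\<in>M. uplus S q p = p}"
  have Zeq: "Z = {q\<in>M. \<forall>D\<in>{{x\<in>S. lshift S x A \<in> p} | A. A \<in> p}. D \<in> q}"
  proof (rule set_eqI)
    fix q
    show "q \<in> Z \<longleftrightarrow> q \<in> {q\<in>M. \<forall>D\<in>{{x\<in>S. lshift S x A \<in> p} | A. A \<in> p}. D \<in> q}"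
    proof
      assume "q \<in> Z"
      then have "q \<in> M" "uplus S q p = p" by (auto simp: Z_def)
      then show "q \<in> {q\<in>M. \<forall>D\<in>{{x\<in>S. lshift S x A \<in> p} | A. A \<in> p}. D \<in> q}"
        by (auto simp: uplus_def)
    next
      assume a: "q \<in> {q\<in>M. \<forall>D\<in>{{x\<in>S. lshift S x A \<in> p} | A. A \<in> p}. D \<in> q}"
      then have qM: "q \<in> M" by blast
      have "p \<subseteq> uplus S q p"
      proof
        fix A assume "A \<in> p"
        then show "A \<in> uplus S q p" using a uf_sub[OF up] by (auto simp: uplus_def)
      qed
      moreover have "ultrafilter_on S (uplus S q p)" using uplus_beta[OF ds] qM MB pB
        by (auto simp: betaS_def)
      ultimately have "uplus S q p = p" using uf_eq[OF up] by blast
      then show "q \<in> Z" using qM by (simp add: Z_def)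
    qed
  qed
  have "Z \<in> \<P>" unfolding \<P>_def
  proof (intro CollectI conjI ballI)
    show "Z \<subseteq> E" using Msub by (auto simp: Z_def)
    show "bclosed S Z" unfolding Zeq by (rule bclosed_restrict[OF Mcl]) (auto simp: lshift_def)
    show "Z \<noteq> {}" using q0 by (auto simp: Z_def)
  next
    fix a b assume "a \<in> Z" "b \<in> Z"
    then have ab: "a \<in> M" "b \<in> M" "uplus S a p = p" "uplus S b p = p" by (auto simp: Z_def)
    have "uplus S (uplus S a b) p = uplus S a (uplus S b p)"
      using assoc[OF ds] ab MB pB by blast
    then have "uplus S (uplus S a b) p = p" using ab by simp
    then show "uplus S a b \<in> Z" using Msg ab by (simp add: Z_def)
  qed
  moreover have "Z \<subseteq> M" by (auto simp: Z_def)
  ultimately have "Z = M" using Mmin by blast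
  then have "uplus S p p = p" using pM by (auto simp: Z_def)
  then show ?thesis using pM Msub by blast
qed

end


context
  fixes S :: "real set"
  assumes ds: "dense_subsemigroup S"
begin

lemma orbit_LI:
  assumes p: "p \<in> Oplus S"
  shows "LI S ((\<lambda>q. uplus S q p) ` Oplus S)" "bclosed S ((\<lambda>q. uplus S q p) ` Oplus S)"
proof -
  show "bclosed S ((\<lambda>q. uplus S q p) ` Oplus S)"
    using image_bclosed[OF ds Oplus_bclosed[OF ds], of p] p Oplus_sub[OF ds] by blast
  show "LI S ((\<lambda>q. uplus S q p) ` Oplus S)" unfolding LI_def
  proof (intro conjI ballI)
    show "(\<lambda>q. uplus S q p) ` Oplus S \<noteq> {}" using Oplus_ne[OF ds] by simp
    show "(\<lambda>q. uplus S q p) ` Oplus S \<subseteq> Oplus S" using uplus_Oplus[OF ds] p by auto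
  next
    fix r x assume r: "r \<in> Oplus S" and "x \<in> (\<lambda>q. uplus S q p) ` Oplus S"
    then obtain q where q: "q \<in> Oplus S" "x = uplus S q p" by blast
    have "uplus S r x = uplus S (uplus S r q) p"
      using assoc[OF ds, of r q p] r q p Oplus_sub[OF ds] by (auto)
    moreover have "uplus S r q \<in> Oplus S" using uplus_Oplus[OF ds r q(1)] .
    ultimately show "uplus S r x \<in> (\<lambda>q. uplus S q p) ` Oplus S" by blast
  qed
qed

lemma orbit_sub: "LI S L \<Longrightarrow> q \<in> L \<Longrightarrow> (\<lambda>r. uplus S r q) ` Oplus S \<subseteq> L"
  unfolding LI_def by blast

lemma LI_Oplus: "q \<in> L \<Longrightarrow> LI S L \<Longrightarrow> q \<in> Oplus S"
  unfolding LI_def by blast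

lemma minLI_exists_in:
  assumes L0: "LI S L0" "bclosed S L0"
  shows "\<exists>M. minLI S M \<and> M \<subseteq> L0"
proof -
  define \<P> where "\<P> = {N. LI S N \<and> bclosed S N}"
  have "\<exists>M\<in>\<P>. M \<subseteq> L0 \<and> (\<forall>N\<in>\<P>. N \<subseteq> M \<longrightarrow> N = M)"
  proof (rule zorn_min[OF ds])
    show "bclosed S N \<and> N \<noteq> {}" if "N \<in> \<P>" for N using that by (auto simp: \<P>_def LI_def)
  next
    fix \<C> assume C: "\<C> \<noteq> {}" "\<C> \<subseteq> \<P>" "chain\<^sub>\<subseteq> \<C>" "\<Inter>\<C> \<noteq> {}"
    have "bclosed S (\<Inter>\<C>)" using bclosed_Inter[OF C(1)] C(2) by (auto simp: \<P>_def)
    moreover have "LI S (\<Inter>\<C>)" unfolding LI_def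
    proof (intro conjI ballI)
      show "\<Inter>\<C> \<noteq> {}" by fact
      obtain N0 where "N0 \<in> \<C>" using C(1) by blast
      then have "N0 \<subseteq> Oplus S" "\<Inter>\<C> \<subseteq> N0" using C(2) unfolding \<P>_def LI_def by blast+
      then show "\<Inter>\<C> \<subseteq> Oplus S" by blast
    next
      fix p q assume pq: "p \<in> Oplus S" "q \<in> \<Inter>\<C>"
      show "uplus S p q \<in> \<Inter>\<C>"
      proof
        fix N assume N: "N \<in> \<C>"
        then have "q \<in> N" "LI S N" using pq C(2) by (auto simp: \<P>_def)
        then show "uplus S p q \<in> N" using pq(1) unfolding LI_def by blast
      qed
    qed
    ultimately show "\<Inter>\<C> \<in> \<P>" unfolding \<P>_def by blast
  next
    show "L0 \<in> \<P>" using L0 unfolding \<P>_def by blast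
  qed
  then obtain M where M: "M \<in> \<P>" "M \<subseteq> L0" and Mmin: "\<And>N. N \<in> \<P> \<Longrightarrow> N \<subseteq> M \<Longrightarrow> N = M" by blast
  have "minLI S M" unfolding minLI_def
  proof (intro conjI allI impI)
    show "LI S M" using M by (simp add: \<P>_def)
    fix J assume J: "LI S J \<and> J \<subseteq> M"
    then obtain j where j: "j \<in> J" unfolding LI_def by blast
    have jO: "j \<in> Oplus S" using j J LI_Oplus by blast
    have "(\<lambda>r. uplus S r j) ` Oplus S \<in> \<P>" using orbit_LI[OF jO] by (simp add: \<P>_def)
    moreover have "(\<lambda>r. uplus S r j) ` Oplus S \<subseteq> M" using orbit_sub[of J j] J j by blast
    ultimately have "(\<lambda>r. uplus S r j) ` Oplus S = M" using Mmin by blast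
    then have "M \<subseteq> J" using orbit_sub[of J j] J j by blast
    then show "J = M" using J by blast
  qed
  then show ?thesis using M by blast
qed

lemma minLI_orbit: assumes L: "minLI S L" and q: "q \<in> L" shows "(\<lambda>r. uplus S r q) ` Oplus S = L"
proof -
  have qO: "q \<in> Oplus S" using L q LI_Oplus by (auto simp: minLI_def)
  have "LI S ((\<lambda>r. uplus S r q) ` Oplus S)" using orbit_LI[OF qO] by blast
  moreover have "(\<lambda>r. uplus S r q) ` Oplus S \<subseteq> L" using orbit_sub[of L q] L q by (auto simp: minLI_def)
  ultimately show ?thesis using L unfolding minLI_def by blast
qed

lemma minLI_bclosed: assumes L: "minLI S L" shows "bclosed S L"
proof -
  obtain q where q: "q \<in> L" using L by (auto simp: minLI_def LI_def)
  have qO: "q \<in> Oplus S" using L q LI_Oplus by (auto simp: minLI_def)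
  show ?thesis using orbit_LI(2)[OF qO] minLI_orbit[OF L q] by simp
qed

lemma minLI_right:
  assumes L: "minLI S L" and p: "p \<in> Oplus S"
  shows "minLI S ((\<lambda>q. uplus S q p) ` L)"
proof -
  have LI: "LI S L" using L by (simp add: minLI_def)
  have LO: "L \<subseteq> Oplus S" using LI by (simp add: LI_def)
  have LIp: "LI S ((\<lambda>q. uplus S q p) ` L)" unfolding LI_def
  proof (intro conjI ballI)
    show "(\<lambda>q. uplus S q p) ` L \<noteq> {}" using LI by (simp add: LI_def)
    show "(\<lambda>q. uplus S q p) ` L \<subseteq> Oplus S" using uplus_Oplus[OF ds] p LO by auto
  next
    fix r x assume r: "r \<in> Oplus S" and "x \<in> (\<lambda>q. uplus S q p) ` L"
    then obtain q where q: "q \<in> L" "x = uplus S q p" by blast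
    have "uplus S r x = uplus S (uplus S r q) p"
      using assoc[OF ds, of r q p] r q p LO Oplus_sub[OF ds] by (auto)
    moreover have "uplus S r q \<in> L" using LI r q(1) unfolding LI_def by blast
    ultimately show "uplus S r x \<in> (\<lambda>q. uplus S q p) ` L" by blast
  qed
  show ?thesis unfolding minLI_def
  proof (intro conjI allI impI)
    show "LI S ((\<lambda>q. uplus S q p) ` L)" by fact
    fix J assume J: "LI S J \<and> J \<subseteq> (\<lambda>q. uplus S q p) ` L"
    define M where "M = {q\<in>L. uplus S q p \<in> J}"
    have "LI S M" unfolding LI_def
    proof (intro conjI ballI)
      obtain j where "j \<in> J" using J by (auto simp: LI_def)
      then obtain q where "q \<in> L" "j = uplus S q p" using J by blast
      then show "M \<noteq> {}" using \<open>j \<in> J\<close> by (auto simp: M_def)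
      show "M \<subseteq> Oplus S" using LO by (auto simp: M_def)
    next
      fix r q assume r: "r \<in> Oplus S" and q: "q \<in> M"
      then have q': "q \<in> L" "uplus S q p \<in> J" by (auto simp: M_def)
      have "uplus S (uplus S r q) p = uplus S r (uplus S q p)"
        using assoc[OF ds, of r q p] r q' p LO Oplus_sub[OF ds] by auto
      moreover have "uplus S r (uplus S q p) \<in> J" using J r q' unfolding LI_def by blast
      moreover have "uplus S r q \<in> L" using LI r q' unfolding LI_def by blast
      ultimately show "uplus S r q \<in> M" by (simp add: M_def)
    qed
    moreover have "M \<subseteq> L" by (auto simp: M_def)
    ultimately have "M = L" using L unfolding minLI_def by blast
    then have "(\<lambda>q. uplus S q p) ` L \<subseteq> J" by (auto simp: M_def)
    then show "J = (\<lambda>q. uplus S q p) ` L" using J by blast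
  qed
qed

lemma LI_Oplus_all: "LI S (Oplus S)"
  unfolding LI_def using Oplus_ne[OF ds] uplus_Oplus[OF ds] by blast

lemma minLI_exists: "\<exists>L. minLI S L"
  using minLI_exists_in[OF LI_Oplus_all Oplus_bclosed[OF ds]] by blast

lemma Kideal_min: assumes "u \<in> Kideal S (Oplus S)" shows "\<exists>L. minLI S L \<and> u \<in> L"
proof -
  define K0 where "K0 = \<Union>{L. minLI S L}"
  have "two_sided_ideal S (Oplus S) K0" unfolding two_sided_ideal_def
  proof (intro conjI ballI)
    show "K0 \<noteq> {}" using minLI_exists by (auto simp: K0_def minLI_def LI_def)
    show "K0 \<subseteq> Oplus S" by (auto simp: K0_def minLI_def LI_def)
  next
    fix p q assume p: "p \<in> Oplus S" and q: "q \<in> K0"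
    then obtain L where L: "minLI S L" "q \<in> L" by (auto simp: K0_def)
    have "uplus S p q \<in> L" using L p unfolding minLI_def LI_def by blast
    then show "uplus S p q \<in> K0" using L by (auto simp: K0_def)
    have "uplus S q p \<in> (\<lambda>q. uplus S q p) ` L" using L by blast
    then show "uplus S q p \<in> K0" using minLI_right[OF L(1) p] by (auto simp: K0_def)
  qed
  then have "u \<in> K0" using assms by (auto simp: Kideal_def)
  then show ?thesis by (auto simp: K0_def)
qed

lemma min_Kideal: assumes L: "minLI S L" and u: "u \<in> L" shows "u \<in> Kideal S (Oplus S)"
proof -
  have "u \<in> I" if I: "two_sided_ideal S (Oplus S) I" for I
  proof -
    obtain w where w: "w \<in> I" using I by (auto simp: two_sided_ideal_def)
    have wO: "w \<in> Oplus S" using w I by (auto simp: two_sided_ideal_def)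
    have uO: "u \<in> Oplus S" using L u by (auto simp: minLI_def LI_def)
    have x1: "uplus S w u \<in> I" using I w uO unfolding two_sided_ideal_def by blast
    have x2: "uplus S w u \<in> L" using L u wO unfolding minLI_def LI_def by blast
    have "(\<lambda>r. uplus S r (uplus S w u)) ` Oplus S = L" using minLI_orbit[OF L x2] .
    moreover have "(\<lambda>r. uplus S r (uplus S w u)) ` Oplus S \<subseteq> I"
      using I x1 unfolding two_sided_ideal_def by blast
    ultimately show ?thesis using u by blast
  qed
  then show ?thesis by (auto simp: Kideal_def)
qed

end


lemma sep_closed:
  assumes C: "compact_space X" and H: "Hausdorff_space X"
    and a: "a \<in> topspace X" and b: "b \<in> topspace X" and ab: "a \<noteq> b"
  shows "\<exists>Pa Pb Ka Kb. openin X Pa \<and> openin X Pb \<and> closedin X Ka \<and> closedin X Kb \<and>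
    a \<in> Pa \<and> b \<in> Pb \<and> Pa \<subseteq> Ka \<and> Pb \<subseteq> Kb \<and> Ka \<inter> Kb = {}"
proof -
  have reg: "regular_space X" using compact_Hausdorff_imp_regular_space[OF C H] .
  have cb: "closedin X {b}" using closedin_Hausdorff_singleton[OF H b] .
  obtain U1 V1 where u1: "openin X U1" "openin X V1" "a \<in> U1" "{b} \<subseteq> V1" "disjnt U1 V1"
    using reg cb a ab unfolding regular_space_def by (metis Diff_iff singletonD)
  define Ka where "Ka = topspace X - V1"
  have cKa: "closedin X Ka" using u1(2) by (simp add: Ka_def closedin_diff)
  have PaKa: "U1 \<subseteq> Ka" using u1 openin_subset[OF u1(1)] by (auto simp: Ka_def disjnt_def)
  have bKa: "b \<in> topspace X - Ka" using b u1(4) by (auto simp: Ka_def)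
  obtain U2 V2 where u2: "openin X U2" "openin X V2" "b \<in> U2" "Ka \<subseteq> V2" "disjnt U2 V2"
    using reg cKa bKa unfolding regular_space_def by metis
  define Kb where "Kb = topspace X - V2"
  have cKb: "closedin X Kb" using u2(2) by (simp add: Kb_def closedin_diff)
  have PbKb: "U2 \<subseteq> Kb" using u2 openin_subset[OF u2(1)] by (auto simp: Kb_def disjnt_def)
  have "Ka \<inter> Kb = {}" using u2(4) by (auto simp: Kb_def)
  then show ?thesis using u1 u2 cKa cKb PaKa PbKb by blast
qed

context
  fixes S :: "real set" and X :: "'a topology" and T :: "real \<Rightarrow> 'a \<Rightarrow> 'a"
  assumes ds: "dense_subsemigroup S" and dyn: "dynamical_system X S T"
begin

lemma cpt: "compact_space X" and hd: "Hausdorff_space X"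
  and cont: "\<And>s. s \<in> S \<Longrightarrow> continuous_map X X (T s)"
  and comp: "\<And>s t z. s \<in> S \<Longrightarrow> t \<in> S \<Longrightarrow> z \<in> topspace X \<Longrightarrow> T s (T t z) = T (s + t) z"
  using dyn by (auto simp: dynamical_system_def)

lemma Tin: "s \<in> S \<Longrightarrow> z \<in> topspace X \<Longrightarrow> T s z \<in> topspace X"
  using continuous_map_image_subset_topspace[OF cont] by blast

definition islim where
  "islim p z w \<longleftrightarrow> w \<in> topspace X \<and> (\<forall>U. openin X U \<and> w \<in> U \<longrightarrow> {s\<in>S. T s z \<in> U} \<in> p)"

lemma lim_exists:
  assumes p: "ultrafilter_on S p" and z: "z \<in> topspace X"
  shows "\<exists>w. islim p z w"
proof (rule ccontr)
  assume n: "\<not> (\<exists>w. islim p z w)"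
  have "\<forall>w\<in>topspace X. \<exists>U. openin X U \<and> w \<in> U \<and> {s\<in>S. T s z \<in> U} \<notin> p"
    using n unfolding islim_def by blast
  then obtain Uf where Uf: "\<And>w. w \<in> topspace X \<Longrightarrow> openin X (Uf w) \<and> w \<in> Uf w \<and> {s\<in>S. T s z \<in> Uf w} \<notin> p"
    by metis
  have cov: "topspace X \<subseteq> \<Union>(Uf ` topspace X)" using Uf by blast
  have opn: "\<forall>U \<in> Uf ` topspace X. openin X U" using Uf by blast
  have "\<exists>\<F>. finite \<F> \<and> \<F> \<subseteq> Uf ` topspace X \<and> topspace X \<subseteq> \<Union>\<F>"
    using cpt[unfolded compact_space_alt, rule_format, of "Uf ` topspace X"] cov opn by blast
  then obtain \<F> where F: "finite \<F>" "\<F> \<subseteq> Uf ` topspace X" "topspace X \<subseteq> \<Union>\<F>" by blast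
  obtain G where G: "G \<subseteq> topspace X" "finite G" "\<F> = Uf ` G"
    using finite_subset_image[OF F(1,2)] by blast
  have "S \<subseteq> (\<Union>w\<in>G. {s\<in>S. T s z \<in> Uf w})"
  proof
    fix s assume s: "s \<in> S"
    then have "T s z \<in> topspace X" using Tin z by blast
    then obtain w where "w \<in> G" "T s z \<in> Uf w" using F(3) G(3) by blast
    then show "s \<in> (\<Union>w\<in>G. {s\<in>S. T s z \<in> Uf w})" using s by blast
  qed
  then have "(\<Union>w\<in>G. {s\<in>S. T s z \<in> Uf w}) \<in> p"
    using uf_mono[OF p uf_S[OF p]] by blast
  then obtain w where "w \<in> G" "{s\<in>S. T s z \<in> Uf w} \<in> p"
    using uf_UN[OF p G(2), of "\<lambda>w. {s\<in>S. T s z \<in> Uf w}"] by blast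
  then show False using Uf G(1) by blast
qed

lemma lim_unique:
  assumes p: "ultrafilter_on S p" and "islim p z w1" "islim p z w2"
  shows "w1 = w2"
proof (rule ccontr)
  assume ne: "w1 \<noteq> w2"
  have w: "w1 \<in> topspace X" "w2 \<in> topspace X" using assms by (auto simp: islim_def)
  obtain U V where UV: "openin X U" "openin X V" "w1 \<in> U" "w2 \<in> V" "disjnt U V"
    using hd w ne unfolding Hausdorff_space_def by metis
  have "{s\<in>S. T s z \<in> U} \<in> p" "{s\<in>S. T s z \<in> V} \<in> p" using assms UV unfolding islim_def by blast+
  then have "{s\<in>S. T s z \<in> U} \<inter> {s\<in>S. T s z \<in> V} \<noteq> {}" using uf_ne[OF p] by blast
  then show False using UV(5) by (auto simp: disjnt_def)
qed

lemma Tp_lim: assumes p: "ultrafilter_on S p" and z: "z \<in> topspace X"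
  shows "islim p z (Tp X S T p z)"
proof -
  obtain w where w: "islim p z w" using lim_exists[OF p z] by blast
  have "Tp X S T p z = w" unfolding Tp_def
  proof (rule the_equality)
    show "w \<in> topspace X \<and> (\<forall>U. openin X U \<and> w \<in> U \<longrightarrow> {s \<in> S. T s z \<in> U} \<in> p)"
      using w by (simp add: islim_def)
    fix w' assume "w' \<in> topspace X \<and> (\<forall>U. openin X U \<and> w' \<in> U \<longrightarrow> {s \<in> S. T s z \<in> U} \<in> p)"
    then have "islim p z w'" by (simp add: islim_def)
    then show "w' = w" using lim_unique[OF p w] by simp
  qed
  then show ?thesis using w by simp
qed

lemma Tp_eqI: assumes p: "ultrafilter_on S p" and z: "z \<in> topspace X" and w: "islim p z w"
  shows "Tp X S T p z = w"
  using lim_unique[OF p Tp_lim[OF p z] w] .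

lemma Tp_in: "ultrafilter_on S p \<Longrightarrow> z \<in> topspace X \<Longrightarrow> Tp X S T p z \<in> topspace X"
  using Tp_lim by (simp add: islim_def)

lemma Tp_open: "ultrafilter_on S p \<Longrightarrow> z \<in> topspace X \<Longrightarrow> openin X U \<Longrightarrow> Tp X S T p z \<in> U
   \<Longrightarrow> {s\<in>S. T s z \<in> U} \<in> p"
  using Tp_lim by (simp add: islim_def)

lemma Tp_comp:
  assumes p: "ultrafilter_on S p" and q: "ultrafilter_on S q" and x: "x \<in> topspace X"
  shows "Tp X S T (uplus S p q) x = Tp X S T p (Tp X S T q x)"
proof -
  define z where "z = Tp X S T q x"
  define w where "w = Tp X S T p z"
  have z: "z \<in> topspace X" using Tp_in[OF q x] by (simp add: z_def)
  have w: "w \<in> topspace X" using Tp_in[OF p z] by (simp add: w_def)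
  have pq: "ultrafilter_on S (uplus S p q)" using uplus_uf[OF sg[OF ds] p q] .
  have "islim (uplus S p q) x w" unfolding islim_def
  proof (intro conjI allI impI)
    show "w \<in> topspace X" by fact
    fix U assume U: "openin X U \<and> w \<in> U"
    define A where "A = {s\<in>S. T s x \<in> U}"
    have "{s\<in>S. T s z \<in> U} \<in> p" using Tp_open[OF p z] U by (simp add: w_def)
    moreover have "{s\<in>S. T s z \<in> U} \<subseteq> {s\<in>S. lshift S s A \<in> q}"
    proof
      fix s assume s: "s \<in> {s\<in>S. T s z \<in> U}"
      define V where "V = {v \<in> topspace X. T s v \<in> U}"
      have "openin X V" using openin_continuous_map_preimage[OF cont U[THEN conjunct1]] s by (simp add: V_def)
      moreover have "z \<in> V" using s z by (simp add: V_def)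
      ultimately have "{t\<in>S. T t x \<in> V} \<in> q" using Tp_open[OF q x] by (simp add: z_def)
      moreover have "{t\<in>S. T t x \<in> V} \<subseteq> lshift S s A"
      proof
        fix t assume t: "t \<in> {t\<in>S. T t x \<in> V}"
        then have "T s (T t x) \<in> U" by (simp add: V_def)
        then have "T (s + t) x \<in> U" using comp[of s t x] s t x by simp
        moreover have "s + t \<in> S" using sg[OF ds] s t by blast
        ultimately show "t \<in> lshift S s A" using t by (simp add: lshift_def A_def)
      qed
      ultimately have "lshift S s A \<in> q" using uf_mono[OF q _ _ lshift_sub] by blast
      then show "s \<in> {s\<in>S. lshift S s A \<in> q}" using s by blast
    qed
    ultimately have "{s\<in>S. lshift S s A \<in> q} \<in> p" using uf_mono[OF p] by blast
    then show "{s\<in>S. T s x \<in> U} \<in> uplus S p q" by (simp add: uplus_def A_def)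
  qed
  then show ?thesis using Tp_eqI[OF pq x] by (simp add: w_def z_def)
qed

lemma Tp_bclosed:
  assumes C: "bclosed S C" and K: "closedin X K" and y: "y \<in> topspace X"
  shows "bclosed S {q\<in>C. Tp X S T q y \<in> K}"
  unfolding bclosed_def
proof (intro conjI ballI impI)
  show "{q\<in>C. Tp X S T q y \<in> K} \<subseteq> betaS S" using C by (auto simp: bclosed_def)
next
  fix r assume r: "r \<in> betaS S" and h: "\<forall>A\<in>r. \<exists>q\<in>{q\<in>C. Tp X S T q y \<in> K}. A \<in> q"
  have ur: "ultrafilter_on S r" using r by (simp add: betaS_def)
  have "\<forall>A\<in>r. \<exists>q\<in>C. A \<in> q" using h by blast
  then have rC: "r \<in> C" using C r unfolding bclosed_def by blast
  have "Tp X S T r y \<in> K"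
  proof (rule ccontr)
    assume nK: "Tp X S T r y \<notin> K"
    have "Tp X S T r y \<in> topspace X - K" using nK Tp_in[OF ur y] by blast
    then obtain U V where UV: "openin X U" "openin X V" "Tp X S T r y \<in> U" "K \<subseteq> V" "disjnt U V"
      using compact_Hausdorff_imp_regular_space[OF cpt hd] K unfolding regular_space_def by metis
    have "{s\<in>S. T s y \<in> U} \<in> r" using Tp_open[OF ur y UV(1) UV(3)] .
    then obtain q where q: "q \<in> {q\<in>C. Tp X S T q y \<in> K}" "{s\<in>S. T s y \<in> U} \<in> q" using h by blast
    have uq: "ultrafilter_on S q" using q C by (auto simp: bclosed_def betaS_def)
    have "Tp X S T q y \<in> V" using q UV(4) by blast
    then have "{s\<in>S. T s y \<in> V} \<in> q" using Tp_open[OF uq y UV(2)] by blast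
    then have "{s\<in>S. T s y \<in> U} \<inter> {s\<in>S. T s y \<in> V} \<noteq> {}" using uf_ne[OF uq] q by blast
    then show False using UV(5) by (auto simp: disjnt_def)
  qed
  then show "r \<in> {q\<in>C. Tp X S T q y \<in> K}" using rC by blast
qed

end


context
  fixes S :: "real set" and X :: "'a topology" and T :: "real \<Rightarrow> 'a \<Rightarrow> 'a"
  assumes ds: "dense_subsemigroup S" and dyn: "dynamical_system X S T"
begin

lemmas TpC = Tp_comp[OF ds dyn] and TpO = Tp_open[OF ds dyn] and TpI = Tp_in[OF ds dyn]
lemmas compT = comp[OF ds dyn] and contT = cont[OF ds dyn]

lemma fwd:
  assumes x: "x \<in> topspace X" and y: "y \<in> topspace X"
    and uK: "u \<in> Kideal S (Oplus S)" and uu: "uplus S u u = u" and ux: "Tp X S T u x = y"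
  shows "unif_rec_near_zero X S T y \<and> proximal_near_zero X S T x y"
proof -
  obtain L where L: "minLI S L" "u \<in> L" using Kideal_min[OF ds uK] by blast
  have uO: "u \<in> Oplus S" using L by (auto simp: minLI_def LI_def)
  have ub: "ultrafilter_on S u" using Oplus_beta[OF uO] .
  have uy: "Tp X S T u y = y"
  proof -
    have "Tp X S T u y = Tp X S T u (Tp X S T u x)" using ux by simp
    also have "\<dots> = Tp X S T (uplus S u u) x" using TpC[OF ub ub x] by simp
    also have "\<dots> = y" using uu ux by simp
    finally show ?thesis .
  qed
  have prox: "proximal_near_zero X S T x y"
    unfolding proximal_near_zero_def
  proof (intro allI impI)
    fix U and \<epsilon> :: real
    assume a: "neighbourhood (prod_topology X X) {(z, z) |z. z \<in> topspace X} U \<and> 0 < \<epsilon>"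
    then obtain V where V: "openin (prod_topology X X) V" "{(z, z) |z. z \<in> topspace X} \<subseteq> V" "V \<subseteq> U"
      unfolding neighbourhood_def by blast
    have yyV: "(y, y) \<in> V" using V(2) y by blast
    have "\<exists>A B. openin X A \<and> openin X B \<and> y \<in> A \<and> y \<in> B \<and> A \<times> B \<subseteq> V"
      using V(1)[unfolded openin_prod_topology_alt, rule_format, OF yyV] .
    then obtain A B where AB: "openin X A" "openin X B" "y \<in> A" "y \<in> B" "A \<times> B \<subseteq> V"
      by blast
    have s1: "{s\<in>S. T s x \<in> A} \<in> u" using TpO[OF ub x AB(1)] ux AB(3) by simp
    have s2: "{s\<in>S. T s y \<in> B} \<in> u" using TpO[OF ub y AB(2)] uy AB(4) by simp
    have s3: "S \<inter> {0<..<\<epsilon>} \<in> u" using uO a by (simp add: Oplus_def)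
    have "{s\<in>S. T s x \<in> A} \<inter> {s\<in>S. T s y \<in> B} \<in> u" using uf_Int[OF ub s1 s2] .
    then have "{s\<in>S. T s x \<in> A} \<inter> {s\<in>S. T s y \<in> B} \<inter> (S \<inter> {0<..<\<epsilon>}) \<noteq> {}"
      using uf_ne[OF ub _ s3] by blast
    then obtain s where s: "s \<in> S \<inter> {0<..<\<epsilon>}" "T s x \<in> A" "T s y \<in> B" by blast
    then have "(T s x, T s y) \<in> U" using AB(5) V(3) by blast
    then show "\<exists>s\<in>S \<inter> {0<..<\<epsilon>}. (T s x, T s y) \<in> U" using s(1) by blast
  qed
  have ur: "unif_rec_near_zero X S T y"
    unfolding unif_rec_near_zero_def
  proof (intro allI impI)
    fix W assume W: "neighbourhood X {y} W"
    then have "\<exists>U. openin X U \<and> {y} \<subseteq> U \<and> U \<subseteq> W" unfolding neighbourhood_def by (elim conjE)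
    then obtain U0 where U0: "openin X U0" "y \<in> U0" "U0 \<subseteq> W" by blast
    define B where "B = {s\<in>S. T s y \<in> W}"
    show "syndetic_near_zero S {s\<in>S. T s y \<in> W}"
    proof (rule ccontr)
      assume "\<not> syndetic_near_zero S {s\<in>S. T s y \<in> W}"
      define Q where "Q = (\<lambda>\<epsilon>::real. \<exists>F. finite F \<and> F \<noteq> {} \<and> F \<subseteq> {0<..<\<epsilon>} \<inter> S
          \<and> (\<exists>\<delta>>0. S \<inter> {0<..<\<delta>} \<subseteq> (\<Union>t\<in>F. lshift S t B)))"
      have "\<not> (\<forall>\<epsilon>>0. Q \<epsilon>)" using \<open>\<not> syndetic_near_zero S {s\<in>S. T s y \<in> W}\<close>
        unfolding syndetic_near_zero_def B_def Q_def .
      then obtain \<epsilon> :: real where e: "\<epsilon> > 0" and nQ: "\<not> Q \<epsilon>" by blast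
      have ns: "\<not> (\<exists>\<delta>>0. S \<inter> {0<..<\<delta>} \<subseteq> (\<Union>t\<in>F. lshift S t B))"
        if Fc: "finite F" "F \<noteq> {}" "F \<subseteq> {0<..<\<epsilon>} \<inter> S" for F
      proof
        assume "\<exists>\<delta>>0. S \<inter> {0<..<\<delta>} \<subseteq> (\<Union>t\<in>F. lshift S t B)"
        then have "Q \<epsilon>" unfolding Q_def using Fc by blast
        then show False using nQ by blast
      qed
      define \<F> where "\<F> = {S \<inter> {0<..<\<delta>} - (\<Union>t\<in>F. lshift S t B) | F \<delta>. finite F \<and> F \<subseteq> {0<..<\<epsilon>} \<inter> S \<and> \<delta> > 0}"
      have "\<F> \<subseteq> Pow S" by (auto simp: \<F>_def)
      moreover have "{} \<notin> \<F>"
      proof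
        assume "{} \<in> \<F>"
        then obtain F \<delta> where F: "finite F" "F \<subseteq> {0<..<\<epsilon>} \<inter> S" "\<delta> > 0"
          "S \<inter> {0<..<\<delta>} - (\<Union>t\<in>F. lshift S t B) = {}" unfolding \<F>_def by blast
        then have sub: "S \<inter> {0<..<\<delta>} \<subseteq> (\<Union>t\<in>F. lshift S t B)" by blast
        show False
        proof (cases "F = {}")
          case True then show False using sub dense_small[OF ds F(3)] by auto
        next
          case False then show False using ns[OF F(1) False F(2)] sub F(3) by blast
        qed
      qed
      moreover have "A1 \<inter> A2 \<in> \<F>" if A: "A1 \<in> \<F>" "A2 \<in> \<F>" for A1 A2
      proof -
        obtain F1 \<delta>1 where 1: "A1 = S \<inter> {0<..<\<delta>1} - (\<Union>t\<in>F1. lshift S t B)" "finite F1" "F1 \<subseteq> {0<..<\<epsilon>} \<inter> S" "\<delta>1 > 0"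
          using A(1) unfolding \<F>_def by blast
        obtain F2 \<delta>2 where 2: "A2 = S \<inter> {0<..<\<delta>2} - (\<Union>t\<in>F2. lshift S t B)" "finite F2" "F2 \<subseteq> {0<..<\<epsilon>} \<inter> S" "\<delta>2 > 0"
          using A(2) unfolding \<F>_def by blast
        have "A1 \<inter> A2 = S \<inter> {0<..<min \<delta>1 \<delta>2} - (\<Union>t\<in>F1 \<union> F2. lshift S t B)" using 1 2 by auto
        moreover have "finite (F1 \<union> F2)" "F1 \<union> F2 \<subseteq> {0<..<\<epsilon>} \<inter> S" "min \<delta>1 \<delta>2 > 0" using 1 2 by auto
        ultimately show ?thesis unfolding \<F>_def by blast
      qed
      ultimately obtain q where q: "ultrafilter_on S q" "\<F> \<subseteq> q"
        using ultrafilter_exists[OF S_ne[OF ds]] by metis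
      have qO: "q \<in> Oplus S"
      proof -
        have "S \<inter> {0<..<\<delta>} \<in> q" if "\<delta> > 0" for \<delta>
        proof -
          have "S \<inter> {0<..<\<delta>} - (\<Union>t\<in>{}. lshift S t B) \<in> \<F>" unfolding \<F>_def using that by blast
          then show ?thesis using q(2) by auto
        qed
        then show ?thesis using q(1) by (simp add: Oplus_def betaS_def)
      qed
      have nq: "lshift S t B \<notin> q" if t: "t \<in> S \<inter> {0<..<\<epsilon>}" for t
      proof
        assume tq: "lshift S t B \<in> q"
        have "S \<inter> {0<..<1} - (\<Union>t\<in>{t}. lshift S t B) \<in> \<F>" unfolding \<F>_def
          apply (intro CollectI exI[of _ "{t}"] exI[of _ "1::real"]) using t by auto
        then have "S \<inter> {0<..<1} - lshift S t B \<in> q" using q(2) by auto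
        then show False using uf_ne[OF q(1) tq] by blast
      qed
      have LI: "LI S L" using L by (simp add: minLI_def)
      define q' where "q' = uplus S q u"
      have q'L: "q' \<in> L" using LI qO L(2) unfolding LI_def q'_def by blast
      have "u \<in> (\<lambda>r. uplus S r q') ` Oplus S" using minLI_orbit[OF ds L(1) q'L] L(2) by simp
      then obtain r where r: "r \<in> Oplus S" "uplus S r q' = u" by blast
      have rb: "ultrafilter_on S r" using Oplus_beta[OF r(1)] .
      define z where "z = Tp X S T q y"
      have z: "z \<in> topspace X" using TpI[OF q(1) y] by (simp add: z_def)
      have q'b: "ultrafilter_on S q'" using Oplus_beta[OF LI_Oplus[OF ds q'L LI]] .
      have e1: "Tp X S T q' y = Tp X S T q (Tp X S T u y)" unfolding q'_def by (rule TpC[OF q(1) ub y])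
      have e2: "Tp X S T u y = Tp X S T r (Tp X S T q' y)" using TpC[OF rb q'b y] r(2) by simp
      have yr: "Tp X S T r z = y" using e1 e2 uy by (simp add: z_def)
      have "{s\<in>S. T s z \<in> U0} \<in> r" using TpO[OF rb z U0(1)] yr U0(2) by simp
      moreover have "S \<inter> {0<..<\<epsilon>} \<in> r" using r(1) e by (simp add: Oplus_def)
      ultimately have "{s\<in>S. T s z \<in> U0} \<inter> (S \<inter> {0<..<\<epsilon>}) \<noteq> {}" using uf_ne[OF rb] by blast
      then obtain t where t: "t \<in> S \<inter> {0<..<\<epsilon>}" "T t z \<in> U0" by blast
      define V where "V = {v \<in> topspace X. T t v \<in> U0}"
      have "openin X V" unfolding V_def using openin_continuous_map_preimage[OF contT U0(1)] t by blast
      moreover have "z \<in> V" using z t by (simp add: V_def)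
      ultimately have "{s\<in>S. T s y \<in> V} \<in> q" using TpO[OF q(1) y] by (simp add: z_def)
      moreover have "{s\<in>S. T s y \<in> V} \<subseteq> lshift S t B"
      proof
        fix s assume s: "s \<in> {s\<in>S. T s y \<in> V}"
        then have "T t (T s y) \<in> U0" by (simp add: V_def)
        then have "T (t + s) y \<in> W" using compT[of t s y] s t y U0(3) by auto
        moreover have "t + s \<in> S" using sg[OF ds] s t by blast
        ultimately show "s \<in> lshift S t B" using s by (simp add: lshift_def B_def)
      qed
      ultimately have "lshift S t B \<in> q" using uf_mono[OF q(1) _ _ lshift_sub] by blast
      then show False using nq[OF t(1)] by blast
    qed
  qed
  show ?thesis using prox ur by blast
qed


lemma bwd:
  assumes x: "x \<in> topspace X" and y: "y \<in> topspace X"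
    and urec: "unif_rec_near_zero X S T y" and prox: "proximal_near_zero X S T x y"
  shows "\<exists>u \<in> Kideal S (Oplus S). uplus S u u = u \<and> Tp X S T u x = y"
proof -
  have cpt': "compact_space X" and hd': "Hausdorff_space X" using dyn by (auto simp: dynamical_system_def)
  define D where "D = {(z, z) |z. z \<in> topspace X}"
  define NB where "NB U \<longleftrightarrow> neighbourhood (prod_topology X X) D U" for U
  have prox': "\<exists>s\<in>S \<inter> {0<..<\<epsilon>}. (T s x, T s y) \<in> U" if NBU: "NB U" "\<epsilon> > 0" for U \<epsilon>
  proof -
    have "neighbourhood (prod_topology X X) {(z, z) |z. z \<in> topspace X} U \<and> \<epsilon> > 0"
      using NBU unfolding NB_def D_def by simp
    then show ?thesis by (rule prox[unfolded proximal_near_zero_def, rule_format])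
  qed
  obtain p0 where p0: "p0 \<in> Oplus S" "Tp X S T p0 x = Tp X S T p0 y"
  proof -
    define \<F> where "\<F> = {S \<inter> {0<..<\<epsilon>} \<inter> {s\<in>S. (T s x, T s y) \<in> U} | \<epsilon> U. \<epsilon> > 0 \<and> NB U}"
    have NBI: "NB (U1 \<inter> U2)" if NB12: "NB U1" "NB U2" for U1 U2
    proof -
      have n1: "U1 \<subseteq> topspace (prod_topology X X) \<and> (\<exists>V. openin (prod_topology X X) V \<and> D \<subseteq> V \<and> V \<subseteq> U1)"
        using NB12(1) by (simp add: NB_def neighbourhood_def)
      have n2: "U2 \<subseteq> topspace (prod_topology X X) \<and> (\<exists>V. openin (prod_topology X X) V \<and> D \<subseteq> V \<and> V \<subseteq> U2)"
        using NB12(2) by (simp add: NB_def neighbourhood_def)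
      obtain V1 where v1: "openin (prod_topology X X) V1" "D \<subseteq> V1" "V1 \<subseteq> U1" using n1 by blast
      obtain V2 where v2: "openin (prod_topology X X) V2" "D \<subseteq> V2" "V2 \<subseteq> U2" using n2 by blast
      have "openin (prod_topology X X) (V1 \<inter> V2)" using openin_Int[OF v1(1) v2(1)] .
      moreover have "D \<subseteq> V1 \<inter> V2" "V1 \<inter> V2 \<subseteq> U1 \<inter> U2" using v1 v2 by auto
      moreover have "U1 \<inter> U2 \<subseteq> topspace (prod_topology X X)" using n1 by blast
      ultimately have "U1 \<inter> U2 \<subseteq> topspace (prod_topology X X) \<and> (\<exists>V. openin (prod_topology X X) V \<and> D \<subseteq> V \<and> V \<subseteq> U1 \<inter> U2)"
        by blast
      then show ?thesis by (simp add: NB_def neighbourhood_def)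
    qed
    have NBtop: "NB (topspace (prod_topology X X))"
      unfolding NB_def neighbourhood_def D_def by auto
    have "\<F> \<subseteq> Pow S" by (auto simp: \<F>_def)
    moreover have "{} \<notin> \<F>"
    proof
      assume "{} \<in> \<F>"
      then obtain \<epsilon> U where "\<epsilon> > 0" "NB U" "S \<inter> {0<..<\<epsilon>} \<inter> {s\<in>S. (T s x, T s y) \<in> U} = {}"
        unfolding \<F>_def by blast
      then show False using prox' by blast
    qed
    moreover have "A1 \<inter> A2 \<in> \<F>" if A: "A1 \<in> \<F>" "A2 \<in> \<F>" for A1 A2
    proof -
      obtain e1 U1 where 1: "A1 = S \<inter> {0<..<e1} \<inter> {s\<in>S. (T s x, T s y) \<in> U1}" "e1 > 0" "NB U1"
        using A(1) unfolding \<F>_def by blast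
      obtain e2 U2 where 2: "A2 = S \<inter> {0<..<e2} \<inter> {s\<in>S. (T s x, T s y) \<in> U2}" "e2 > 0" "NB U2"
        using A(2) unfolding \<F>_def by blast
      have "A1 \<inter> A2 = S \<inter> {0<..<min e1 e2} \<inter> {s\<in>S. (T s x, T s y) \<in> U1 \<inter> U2}" using 1 2 by auto
      moreover have "min e1 e2 > 0" "NB (U1 \<inter> U2)" using 1 2 NBI by auto
      ultimately show ?thesis unfolding \<F>_def by blast
    qed
    ultimately obtain p where p: "ultrafilter_on S p" "\<F> \<subseteq> p"
      using ultrafilter_exists[OF S_ne[OF ds]] by metis
    have Fp: "S \<inter> {0<..<\<epsilon>} \<inter> {s\<in>S. (T s x, T s y) \<in> U} \<in> p" if "\<epsilon> > 0" "NB U" for \<epsilon> U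
    proof -
      have "S \<inter> {0<..<\<epsilon>} \<inter> {s\<in>S. (T s x, T s y) \<in> U} \<in> \<F>" unfolding \<F>_def using that by blast
      then show ?thesis using p(2) by blast
    qed
    have pO: "p \<in> Oplus S"
    proof -
      have "S \<inter> {0<..<\<epsilon>} \<in> p" if "\<epsilon> > 0" for \<epsilon>
        using uf_mono[OF p(1) Fp[OF that NBtop]] by blast
      then show ?thesis using p(1) by (simp add: Oplus_def betaS_def)
    qed
    have "Tp X S T p x = Tp X S T p y"
    proof (rule ccontr)
      assume ne: "Tp X S T p x \<noteq> Tp X S T p y"
      obtain Pa Pb Ka Kb where sep: "openin X Pa" "openin X Pb" "closedin X Ka" "closedin X Kb"
        "Tp X S T p x \<in> Pa" "Tp X S T p y \<in> Pb" "Pa \<subseteq> Ka" "Pb \<subseteq> Kb" "Ka \<inter> Kb = {}"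
        using sep_closed[OF cpt' hd' TpI[OF p(1) x] TpI[OF p(1) y] ne] by blast
      define U where "U = topspace (prod_topology X X) - Ka \<times> Kb"
      have "closedin (prod_topology X X) (Ka \<times> Kb)" using sep(3,4) by (simp add: closedin_prod_Times_iff)
      then have oU: "openin (prod_topology X X) U" unfolding U_def by (rule openin_diff[OF openin_topspace])
      have "D \<subseteq> U" using sep(9) unfolding D_def U_def by auto
      then have "NB U" using oU unfolding NB_def neighbourhood_def U_def by blast
      then have s1: "S \<inter> {0<..<1} \<inter> {s\<in>S. (T s x, T s y) \<in> U} \<in> p" using Fp by simp
      have s2: "{s\<in>S. T s x \<in> Pa} \<in> p" using TpO[OF p(1) x sep(1,5)] .
      have s3: "{s\<in>S. T s y \<in> Pb} \<in> p" using TpO[OF p(1) y sep(2,6)] .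
      have "{s\<in>S. T s x \<in> Pa} \<inter> {s\<in>S. T s y \<in> Pb} \<in> p" using uf_Int[OF p(1) s2 s3] .
      then have "S \<inter> {0<..<1} \<inter> {s\<in>S. (T s x, T s y) \<in> U} \<inter> ({s\<in>S. T s x \<in> Pa} \<inter> {s\<in>S. T s y \<in> Pb}) \<noteq> {}"
        using uf_ne[OF p(1) s1] by blast
      then obtain s where "(T s x, T s y) \<in> U" "T s x \<in> Pa" "T s y \<in> Pb" by blast
      then show False using sep(7,8) unfolding U_def by blast
    qed
    then show ?thesis using that pO by blast
  qed
  have p0b: "ultrafilter_on S p0" using Oplus_beta[OF p0(1)] .
  define Orb where "Orb = (\<lambda>r. uplus S r p0) ` Oplus S"
  obtain L where L: "minLI S L" "L \<subseteq> Orb"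
    using minLI_exists_in[OF ds orbit_LI[OF ds p0(1)]] unfolding Orb_def by blast
  have LI: "LI S L" using L(1) by (simp add: minLI_def)
  have LO: "L \<subseteq> Oplus S" using LI by (simp add: LI_def)
  have Lcl: "bclosed S L" using minLI_bclosed[OF ds L(1)] .
  have Lxy: "Tp X S T q x = Tp X S T q y" if q: "q \<in> L" for q
  proof -
    obtain r where r: "r \<in> Oplus S" "q = uplus S r p0" using q L(2) unfolding Orb_def by blast
    have rb: "ultrafilter_on S r" using Oplus_beta[OF r(1)] .
    show ?thesis using TpC[OF rb p0b x] TpC[OF rb p0b y] p0(2) r(2) by simp
  qed
  define CW where "CW W = {q\<in>L. Tp X S T q y \<in> X closure_of W}" for W
  have CWne: "CW W \<noteq> {}" if W: "openin X W" "y \<in> W" for W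
  proof -
    obtain p where pL: "p \<in> L" using LI by (auto simp: LI_def)
    have pO: "p \<in> Oplus S" using pL LO by blast
    have pb: "ultrafilter_on S p" using Oplus_beta[OF pO] .
    define B where "B = {s\<in>S. T s y \<in> W}"
    have "neighbourhood X {y} W" unfolding neighbourhood_def using W openin_subset[OF W(1)] by blast
    then have syn: "syndetic_near_zero S B"
      unfolding B_def by (rule urec[unfolded unif_rec_near_zero_def, rule_format])
    define Dp where "Dp = {t\<in>S. lshift S t B \<in> p}"
    have Dsmall: "Dp \<inter> {0<..<\<epsilon>} \<noteq> {}" if e: "\<epsilon> > 0" for \<epsilon>
    proof -
      have "\<exists>F. finite F \<and> F \<noteq> {} \<and> F \<subseteq> {0<..<\<epsilon>} \<inter> S \<and> (\<exists>\<delta>>0. S \<inter> {0<..<\<delta>} \<subseteq> (\<Union>t\<in>F. lshift S t B))"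
        using syn[unfolded syndetic_near_zero_def, rule_format, OF e] .
      then obtain F \<delta> where F: "finite F" "F \<subseteq> {0<..<\<epsilon>} \<inter> S" "\<delta> > 0"
        "S \<inter> {0<..<\<delta>} \<subseteq> (\<Union>t\<in>F. lshift S t B)" by blast
      have "S \<inter> {0<..<\<delta>} \<in> p" using pO F(3) by (simp add: Oplus_def)
      moreover have "(\<Union>t\<in>F. lshift S t B) \<subseteq> S" using lshift_sub by blast
      ultimately have "(\<Union>t\<in>F. lshift S t B) \<in> p" using uf_mono[OF pb _ F(4)] by blast
      then obtain t where "t \<in> F" "lshift S t B \<in> p" using uf_UN[OF pb F(1), of "\<lambda>t. lshift S t B"] lshift_sub by blast
      then have "t \<in> Dp \<inter> {0<..<\<epsilon>}" using F(2) by (auto simp: Dp_def)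
      then show ?thesis by blast
    qed
    define \<F> where "\<F> = {Dp \<inter> {0<..<\<epsilon>} | \<epsilon>. \<epsilon> > 0}"
    have "\<F> \<subseteq> Pow S" by (auto simp: \<F>_def Dp_def)
    moreover have "{} \<notin> \<F>" using Dsmall by (auto simp: \<F>_def)
    moreover have "A1 \<inter> A2 \<in> \<F>" if A: "A1 \<in> \<F>" "A2 \<in> \<F>" for A1 A2
    proof -
      obtain e1 where 1: "A1 = Dp \<inter> {0<..<e1}" "e1 > 0" using A(1) unfolding \<F>_def by blast
      obtain e2 where 2: "A2 = Dp \<inter> {0<..<e2}" "e2 > 0" using A(2) unfolding \<F>_def by blast
      have "A1 \<inter> A2 = Dp \<inter> {0<..<min e1 e2}" "min e1 e2 > 0" using 1 2 by auto
      then show ?thesis unfolding \<F>_def by blast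
    qed
    ultimately obtain r where r: "ultrafilter_on S r" "\<F> \<subseteq> r"
      using ultrafilter_exists[OF S_ne[OF ds]] by metis
    have Dr: "Dp \<inter> {0<..<\<epsilon>} \<in> r" if "\<epsilon> > 0" for \<epsilon> using r(2) that unfolding \<F>_def by blast
    have rO: "r \<in> Oplus S"
    proof -
      have "S \<inter> {0<..<\<epsilon>} \<in> r" if "\<epsilon> > 0" for \<epsilon>
        using uf_mono[OF r(1) Dr[OF that]] by (auto simp: Dp_def)
      then show ?thesis using r(1) by (simp add: Oplus_def betaS_def)
    qed
    have Drr: "Dp \<in> r" using uf_mono[OF r(1) Dr[of 1]] by (auto simp: Dp_def)
    have Brp: "B \<in> uplus S r p" using Drr by (auto simp: uplus_def Dp_def B_def)
    have rpL: "uplus S r p \<in> L" using LI rO pL unfolding LI_def by blast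
    have rpb: "ultrafilter_on S (uplus S r p)" using uplus_uf[OF sg[OF ds] r(1) pb] .
    have "Tp X S T (uplus S r p) y \<in> X closure_of W"
      unfolding in_closure_of
    proof (intro conjI allI impI)
      show "Tp X S T (uplus S r p) y \<in> topspace X" using TpI[OF rpb y] .
      fix V assume V: "Tp X S T (uplus S r p) y \<in> V \<and> openin X V"
      then have "{s\<in>S. T s y \<in> V} \<in> uplus S r p" using TpO[OF rpb y] by blast
      then have "{s\<in>S. T s y \<in> V} \<inter> B \<noteq> {}" using uf_ne[OF rpb _ Brp] by blast
      then show "\<exists>w. w \<in> W \<and> w \<in> V" unfolding B_def by blast
    qed
    then show ?thesis using rpL unfolding CW_def by blast
  qed
  define \<C> where "\<C> = {CW W | W. openin X W \<and> y \<in> W}"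
  have "\<exists>q. \<forall>C\<in>\<C>. q \<in> C"
  proof (rule bcompact[OF S_ne[OF ds]])
    show "\<C> \<noteq> {}" using y unfolding \<C>_def by blast
  next
    fix C assume "C \<in> \<C>"
    then obtain W where W: "C = CW W" "openin X W" "y \<in> W" unfolding \<C>_def by blast
    have "bclosed S C" unfolding W(1) CW_def by (rule Tp_bclosed[OF ds dyn Lcl closedin_closure_of y])
    then show "bclosed S C \<and> C \<noteq> {}" using CWne[OF W(2,3)] W(1) by blast
  next
    fix C1 C2 assume "C1 \<in> \<C>" "C2 \<in> \<C>"
    then obtain W1 W2 where W: "C1 = CW W1" "openin X W1" "y \<in> W1" "C2 = CW W2" "openin X W2" "y \<in> W2"
      unfolding \<C>_def by blast
    have "CW (W1 \<inter> W2) \<subseteq> C1 \<inter> C2"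
      using closure_of_mono[of "W1 \<inter> W2" W1 X] closure_of_mono[of "W1 \<inter> W2" W2 X]
      unfolding W(1,4) CW_def by blast
    moreover have "CW (W1 \<inter> W2) \<in> \<C>" using W unfolding \<C>_def by blast
    ultimately show "\<exists>C3\<in>\<C>. C3 \<subseteq> C1 \<inter> C2" by blast
  qed
  then obtain q1 where q1: "\<And>C. C \<in> \<C> \<Longrightarrow> q1 \<in> C" by blast
  have q1L: "q1 \<in> L" using q1[of "CW (topspace X)"] y unfolding \<C>_def CW_def by blast
  have q1b: "ultrafilter_on S q1" using Oplus_beta q1L LO by blast
  have q1y: "Tp X S T q1 y = y"
  proof (rule ccontr)
    assume ne: "Tp X S T q1 y \<noteq> y"
    obtain U V where UV: "openin X U" "openin X V" "y \<in> U" "Tp X S T q1 y \<in> V" "disjnt U V"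
      using hd' y TpI[OF q1b y] ne unfolding Hausdorff_space_def by metis
    have "q1 \<in> CW U" using q1 UV(1,3) unfolding \<C>_def by blast
    then have "Tp X S T q1 y \<in> X closure_of U" unfolding CW_def by blast
    then show False using UV unfolding in_closure_of disjnt_def by blast
  qed
  define E where "E = {q\<in>L. Tp X S T q y \<in> {y}}"
  have "bclosed S E" unfolding E_def
    by (rule Tp_bclosed[OF ds dyn Lcl closedin_Hausdorff_singleton[OF hd' y] y])
  moreover have "E \<noteq> {}" using q1L q1y unfolding E_def by blast
  moreover have "uplus S a b \<in> E" if ab: "a \<in> E" "b \<in> E" for a b
  proof -
    have a: "a \<in> L" "Tp X S T a y = y" and b: "b \<in> L" "Tp X S T b y = y" using ab unfolding E_def by auto
    have aO: "a \<in> Oplus S" using a LO by blast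
    have bO: "b \<in> Oplus S" using b LO by blast
    have "uplus S a b \<in> L" using LI aO b(1) unfolding LI_def by blast
    moreover have "Tp X S T (uplus S a b) y = y" using TpC[OF Oplus_beta[OF aO] Oplus_beta[OF bO] y] a b by simp
    ultimately show ?thesis unfolding E_def by blast
  qed
  ultimately obtain u where u: "u \<in> E" "uplus S u u = u" using ellis[OF ds] by blast
  have uL: "u \<in> L" and uy: "Tp X S T u y = y" using u(1) unfolding E_def by auto
  have "u \<in> Kideal S (Oplus S)" using min_Kideal[OF ds L(1) uL] .
  moreover have "Tp X S T u x = y" using Lxy[OF uL] uy by simp
  ultimately show ?thesis using u(2) by blast
qed

end


theorem lemma2p10:
  fixes S :: "real set" and X :: "'a topology" and T :: "real \<Rightarrow> 'a \<Rightarrow> 'a" and x y :: 'a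
  assumes "dense_subsemigroup S"
    and "dynamical_system X S T"
    and "x \<in> topspace X" and "y \<in> topspace X"
  shows "(\<exists>u \<in> Kideal S (Oplus S). uplus S u u = u \<and> Tp X S T u x = y)
     \<longleftrightarrow> (unif_rec_near_zero X S T y \<and> proximal_near_zero X S T x y)"
proof
  assume "\<exists>u \<in> Kideal S (Oplus S). uplus S u u = u \<and> Tp X S T u x = y"
  then obtain u where u: "u \<in> Kideal S (Oplus S)" "uplus S u u = u" "Tp X S T u x = y" by blast
  show "unif_rec_near_zero X S T y \<and> proximal_near_zero X S T x y"
    using fwd[OF assms(1,2,3,4) u] .
next
  assume h: "unif_rec_near_zero X S T y \<and> proximal_near_zero X S T x y"
  show "\<exists>u \<in> Kideal S (Oplus S). uplus S u u = u \<and> Tp X S T u x = y"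
    using bwd[OF assms(1,2,3,4) h[THEN conjunct1] h[THEN conjunct2]] .
qed

end
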